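(* Let $\boldsymbol\psi$ be an admissible symbol. Then $B_{\boldsymbol\psi,\infty}(\mathbb{C})\subseteq H_{\mathbb{C}}(\infty)$ and the inclusion map $B_{\boldsymbol\psi,\infty}(\mathbb{C})\hookrightarrow H_{\mathbb{C}}(\infty)$ is continuous.
   Context: Notation as follows. $\|x\|_p=\max_i|x_i|_p$ on $\mathbb{Q}_p^n$; $d^nx$ Haar measure with $\int_{\mathbb{Z}_p^n}d^nx=1$; $\widehat f(\xi)=\int\chi_p(\xi\cdot x)f(x)d^nx$ with $\chi_p(y)=\exp(2\pi i\{y\}_p)$; $\mathcal{D}(\mathbb{Q}_p^n)$ the locally constant compactly supported complex functions. Negative definite, radial, type 1 and type 2 are as follows: $\psi$ negative definite if $\sum_{i,j}(\psi(x_i)+\overline{\psi(x_j)}-\psi(x_i-x_j))\lambda_i\overline{\lambda_j}\ge0$ for all finite families; radial if $\psi(\xi)$ depends only on $\|\xi\|_p$; type 1 if $C_0[\max\{1,\|\xi\|_p\}]^{\beta_0}\le\max\{1,|\psi(\|\xi\|_p)|\}\le C_1[\max\{1,\|\xi\|_p\}]^{\beta_1}$ for constants $C_0,C_1>0$, $0<\beta_0\le\beta_1$; type 2 if for all $\beta\ge1$ there is $C>0$ with $\max\{1,|\psi(\|\xi\|_p)|\}>C[\max\{1,\|\xi\|_p\}]^\beta$. An admissible symbol is a radial continuous negative definite $\boldsymbol\psi$ of type 1 or 2 with $0<\sup_{\xi\in\mathbb{Z}_p^n}|\boldsymbol\psi(\|\xi\|_p)|\le1$. For $l\in\mathbb{N}$,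 $\|\varphi\|^2_{\boldsymbol\psi,l}=\int[\max\{1,|\boldsymbol\psi(\|\xi\|_p)|\}]^l|\widehat\varphi(\xi)|^2d^n\xi$ on $\mathcal{D}$; $B_{\boldsymbol\psi,l}(\mathbb{C})$ the completion of $\mathcal{D}$ under this norm, $B_{\boldsymbol\psi,\infty}(\mathbb{C})=\bigcap_lB_{\boldsymbol\psi,l}(\mathbb{C})$ with the topology given by all the norms $\|\cdot\|_{\boldsymbol\psi,l}$ (metric $d_{\boldsymbol\psi}(f,g)=\max_l2^{-l}\|f-g\|_{\boldsymbol\psi,l}/(1+\|f-g\|_{\boldsymbol\psi,l})$). $H_{\mathbb{C}}(l)$ and $H_{\mathbb{C}}(\infty)$ denote the same spaces built with $\boldsymbol\psi(\xi)=\|\xi\|_p$, i.e. with norms $\|\varphi\|_l^2=\int[\max\{1,\|\xi\|_p\}]^l|\widehat\varphi(\xi)|^2d^n\xi$. *)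

theory Defs
  imports Complex_Main "HOL-Computational_Algebra.Primes"
begin

text \<open>An element of Q_p is represented by its p-adic digit expansion
  a = sum_i a(i) p^i, i.e. a function a :: int => nat with all digits < p
  and a(i) = 0 for all sufficiently negative i.  Q_p^n is represented by
  functions from a finite index type 'n into such digit expansions.\<close>

type_synonym padic = "int \<Rightarrow> nat"

definition padic :: "nat \<Rightarrow> padic \<Rightarrow> bool" where
  "padic p a \<longleftrightarrow> (\<forall>i. a i < p) \<and> (\<exists>N. \<forall>i<N. a i = 0)"

definition qpv :: "nat \<Rightarrow> ('n \<Rightarrow> padic) set" where
  "qpv p = {x. \<forall>j. padic p (x j)}"

text \<open>Value (as a real number, an element of Z[1/p]) of the truncation
  sum_{i<k} a(i) p^i, i.e. the canonical representative of a mod p^k Z_p.\<close>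
definition tval :: "nat \<Rightarrow> int \<Rightarrow> padic \<Rightarrow> real" where
  "tval p k a = (\<Sum>i\<in>{i. i < k \<and> a i \<noteq> 0}. real (a i) * real p powr real_of_int i)"

text \<open>Subtraction in Q_p: digit i of a - b is determined by a - b mod p^(i+1).\<close>
definition psub :: "nat \<Rightarrow> padic \<Rightarrow> padic \<Rightarrow> padic" where
  "psub p a b = (\<lambda>i. nat (\<lfloor>(tval p (i + 1) a - tval p (i + 1) b) / real p powr real_of_int i\<rfloor>
                           mod int p))"

definition vsub :: "nat \<Rightarrow> ('n \<Rightarrow> padic) \<Rightarrow> ('n \<Rightarrow> padic) \<Rightarrow> ('n \<Rightarrow> padic)" where
  "vsub p x y = (\<lambda>j. psub p (x j) (y j))"

definition pnorm :: "nat \<Rightarrow> padic \<Rightarrow> real" where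
  "pnorm p a = (if \<forall>i. a i = 0 then 0
               else real p powr (- real_of_int (LEAST i. a i \<noteq> 0)))"

definition vnorm :: "nat \<Rightarrow> ('n::finite \<Rightarrow> padic) \<Rightarrow> real" where
  "vnorm p x = Max (range (\<lambda>j. pnorm p (x j)))"

text \<open>The additive character chi_p(xi . x) = exp(2 pi i {xi . x}_p).  For N large,
  xi . x differs from the element r = sum_j tval N (xi j) * tval N (x j) of Z[1/p]
  by an element of Z_p, hence {xi . x}_p = r mod 1 and the sequence below is
  eventually constant equal to chi_p(xi . x).\<close>
definition chi :: "nat \<Rightarrow> ('n::finite \<Rightarrow> padic) \<Rightarrow> ('n \<Rightarrow> padic) \<Rightarrow> complex" where
  "chi p \<xi> x = lim (\<lambda>N::nat. cis (2 * pi *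
       (\<Sum>j\<in>UNIV. tval p (int N) (\<xi> j) * tval p (int N) (x j))))"

text \<open>Representatives of p^(-k) Z_p^n / p^k Z_p^n.\<close>
definition reps :: "nat \<Rightarrow> nat \<Rightarrow> ('n \<Rightarrow> padic) set" where
  "reps p k = {x \<in> qpv p. \<forall>j i. (i < - int k \<or> int k \<le> i) \<longrightarrow> x j i = 0}"

text \<open>Haar integral (normalised by vol(Z_p^n) = 1) as the limit of Riemann sums
  over the cosets of p^k Z_p^n inside p^(-k) Z_p^n (each of volume p^(-kn)).
  For locally constant compactly supported integrands the sequence is
  eventually constant and equals the Haar integral.\<close>
definition haar_int :: "nat \<Rightarrow> (('n::finite \<Rightarrow> padic) \<Rightarrow> 'a::real_normed_vector) \<Rightarrow> 'a" where
  "haar_int p g = lim (\<lambda>k. (real p powr (- (real k * real (card (UNIV :: 'n set))))) *\<^sub>R (\<Sum>x\<in>reps p k. g x))"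

text \<open>The space D(Q_p^n): locally constant functions with compact (= bounded)
  support; by convention they vanish off the carrier.\<close>
definition dfun :: "nat \<Rightarrow> (('n::finite \<Rightarrow> padic) \<Rightarrow> complex) \<Rightarrow> bool" where
  "dfun p \<phi> \<longleftrightarrow> (\<forall>x. x \<notin> qpv p \<longrightarrow> \<phi> x = 0)
      \<and> (\<forall>x\<in>qpv p. \<exists>e>0. \<forall>y\<in>qpv p. vnorm p (vsub p y x) < e \<longrightarrow> \<phi> y = \<phi> x)
      \<and> (\<exists>R. \<forall>x\<in>qpv p. R < vnorm p x \<longrightarrow> \<phi> x = 0)"

definition hat :: "nat \<Rightarrow> (('n::finite \<Rightarrow> padic) \<Rightarrow> complex) \<Rightarrow> ('n \<Rightarrow> padic) \<Rightarrow> complex" where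
  "hat p \<phi> \<xi> = (if \<xi> \<in> qpv p then haar_int p (\<lambda>x. chi p \<xi> x * \<phi> x) else 0)"

definition radial :: "nat \<Rightarrow> (('n::finite \<Rightarrow> padic) \<Rightarrow> complex) \<Rightarrow> bool" where
  "radial p \<psi> \<longleftrightarrow> (\<forall>x\<in>qpv p. \<forall>y\<in>qpv p. vnorm p x = vnorm p y \<longrightarrow> \<psi> x = \<psi> y)"

definition pcontinuous :: "nat \<Rightarrow> (('n::finite \<Rightarrow> padic) \<Rightarrow> complex) \<Rightarrow> bool" where
  "pcontinuous p \<psi> \<longleftrightarrow> (\<forall>x\<in>qpv p. \<forall>e>0. \<exists>d>0. \<forall>y\<in>qpv p.
      vnorm p (vsub p y x) < d \<longrightarrow> cmod (\<psi> y - \<psi> x) < e)"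

definition negdef :: "nat \<Rightarrow> (('n::finite \<Rightarrow> padic) \<Rightarrow> complex) \<Rightarrow> bool" where
  "negdef p \<psi> \<longleftrightarrow> (\<forall>(m::nat) (x::nat \<Rightarrow> 'n \<Rightarrow> padic) (c::nat \<Rightarrow> complex).
      (\<forall>i<m. x i \<in> qpv p) \<longrightarrow>
      (let S = (\<Sum>i<m. \<Sum>j<m. (\<psi> (x i) + cnj (\<psi> (x j)) - \<psi> (vsub p (x i) (x j))) * c i * cnj (c j))
       in Im S = 0 \<and> 0 \<le> Re S))"

definition type1 :: "nat \<Rightarrow> (('n::finite \<Rightarrow> padic) \<Rightarrow> complex) \<Rightarrow> bool" where
  "type1 p \<psi> \<longleftrightarrow> (\<exists>C0 C1 b0 b1. 0 < C0 \<and> 0 < C1 \<and> 0 < b0 \<and> b0 \<le> b1 \<and>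
      (\<forall>\<xi>\<in>qpv p. C0 * max 1 (vnorm p \<xi>) powr b0 \<le> max 1 (cmod (\<psi> \<xi>))
                 \<and> max 1 (cmod (\<psi> \<xi>)) \<le> C1 * max 1 (vnorm p \<xi>) powr b1))"

definition type2 :: "nat \<Rightarrow> (('n::finite \<Rightarrow> padic) \<Rightarrow> complex) \<Rightarrow> bool" where
  "type2 p \<psi> \<longleftrightarrow> (\<forall>b::real. 1 \<le> b \<longrightarrow> (\<exists>C>0. \<forall>\<xi>\<in>qpv p.
      max 1 (cmod (\<psi> \<xi>)) > C * max 1 (vnorm p \<xi>) powr b))"

definition admissible :: "nat \<Rightarrow> (('n::finite \<Rightarrow> padic) \<Rightarrow> complex) \<Rightarrow> bool" where
  "admissible p \<psi> \<longleftrightarrow> radial p \<psi> \<and> pcontinuous p \<psi> \<and> negdef p \<psi> \<and> (type1 p \<psi> \<or> type2 p \<psi>)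
     \<and> (let S = (\<lambda>\<xi>. cmod (\<psi> \<xi>)) ` {\<xi> \<in> qpv p. vnorm p \<xi> \<le> 1}
        in bdd_above S \<and> 0 < Sup S \<and> Sup S \<le> 1)"

text \<open>Weighted norm ||phi||_{w,l}^2 = int max(1, w xi)^l |hat phi xi|^2 d xi.
  B_{psi,l} uses w = |psi|, H(l) uses w = ||.||_p.  For l = 0 this is the L^2 norm.\<close>
definition wnorm :: "nat \<Rightarrow> (('n::finite \<Rightarrow> padic) \<Rightarrow> real) \<Rightarrow> nat \<Rightarrow> (('n \<Rightarrow> padic) \<Rightarrow> complex) \<Rightarrow> real" where
  "wnorm p w l \<phi> = sqrt (haar_int p (\<lambda>\<xi>. (max 1 (w \<xi>)) ^ l * (cmod (hat p \<phi> \<xi>))\<^sup>2))"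

definition wcauchy :: "nat \<Rightarrow> (('n::finite \<Rightarrow> padic) \<Rightarrow> real) \<Rightarrow> nat \<Rightarrow> (nat \<Rightarrow> ('n \<Rightarrow> padic) \<Rightarrow> complex) \<Rightarrow> bool" where
  "wcauchy p w l s \<longleftrightarrow> (\<forall>k. dfun p (s k)) \<and>
     (\<forall>e>0. \<exists>N. \<forall>m\<ge>N. \<forall>k\<ge>N. wnorm p w l (s m - s k) < e)"

text \<open>Common ambient space: the L^2-completion of D, i.e. classes of L^2-Cauchy
  sequences of test functions modulo L^2-null sequences.  All B_{psi,l}, H(l)
  are realised inside it (as the paper does implicitly inside L^2).\<close>
definition cls :: "nat \<Rightarrow> (nat \<Rightarrow> ('n::finite \<Rightarrow> padic) \<Rightarrow> complex) \<Rightarrow> (nat \<Rightarrow> ('n \<Rightarrow> padic) \<Rightarrow> complex) set" where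
  "cls p s = {t. wcauchy p (\<lambda>_. 0) 0 t \<and> (\<lambda>k. wnorm p (\<lambda>_. 0) 0 (s k - t k)) \<longlonglongrightarrow> 0}"

definition Bsp :: "nat \<Rightarrow> (('n::finite \<Rightarrow> padic) \<Rightarrow> real) \<Rightarrow> nat \<Rightarrow> (nat \<Rightarrow> ('n \<Rightarrow> padic) \<Rightarrow> complex) set set" where
  "Bsp p w l = {cls p s | s. wcauchy p w l s}"

definition Binf :: "nat \<Rightarrow> (('n::finite \<Rightarrow> padic) \<Rightarrow> real) \<Rightarrow> (nat \<Rightarrow> ('n \<Rightarrow> padic) \<Rightarrow> complex) set set" where
  "Binf p w = (\<Inter>l. Bsp p w l)"

text \<open>||F - G||_{w,l} for F, G in the completion (extension by continuity).\<close>
definition cdist :: "nat \<Rightarrow> (('n::finite \<Rightarrow> padic) \<Rightarrow> real) \<Rightarrow> nat \<Rightarrow> (nat \<Rightarrow> ('n \<Rightarrow> padic) \<Rightarrow> complex) set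
                    \<Rightarrow> (nat \<Rightarrow> ('n \<Rightarrow> padic) \<Rightarrow> complex) set \<Rightarrow> real" where
  "cdist p w l F G = (THE r. \<exists>s\<in>F. \<exists>t\<in>G. wcauchy p w l s \<and> wcauchy p w l t \<and>
                         (\<lambda>k. wnorm p w l (s k - t k)) \<longlonglongrightarrow> r)"

definition fdist :: "nat \<Rightarrow> (('n::finite \<Rightarrow> padic) \<Rightarrow> real) \<Rightarrow> (nat \<Rightarrow> ('n \<Rightarrow> padic) \<Rightarrow> complex) set
                    \<Rightarrow> (nat \<Rightarrow> ('n \<Rightarrow> padic) \<Rightarrow> complex) set \<Rightarrow> real" where
  "fdist p w F G = (SUP l. (1/2) ^ l * cdist p w l F G / (1 + cdist p w l F G))"

end

theory Submission
  imports Defs "HOL-Analysis.Analysis"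
begin

lemma int_least_exists:
  fixes P :: "int \<Rightarrow> bool"
  assumes "P i" "\<forall>j. P j \<longrightarrow> L \<le> j"
  shows "\<exists>m. P m \<and> (\<forall>j. P j \<longrightarrow> m \<le> j)"
proof -
  have "\<exists>n. P (L + int n)" using assms by (intro exI[of _ "nat (i - L)"]) auto
  then obtain n where n: "P (L + int n)" "\<forall>m<n. \<not> P (L + int m)"
    using exists_least_iff[of "\<lambda>n. P (L + int n)"] by blast
  show ?thesis
  proof (intro exI conjI allI impI)
    show "P (L + int n)" by fact
    fix j assume "P j"
    with assms have "L \<le> j" by auto
    show "L + int n \<le> j"
    proof (rule ccontr)
      assume "\<not> L + int n \<le> j"
      hence "nat (j - L) < n" using \<open>L \<le> j\<close> by auto
      with n(2) have "\<not> P (L + int (nat (j - L)))" by blast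
      with \<open>P j\<close> \<open>L \<le> j\<close> show False by auto
    qed
  qed
qed

lemma pnorm_least:
  assumes "a m \<noteq> 0" "\<forall>j<m. a j = 0"
  shows "pnorm p a = real p powr (- real_of_int m)"
proof -
  have "(LEAST i. a i \<noteq> 0) = m"
    by (rule Least_equality) (use assms in \<open>auto intro: leI\<close>)
  thus ?thesis using assms unfolding pnorm_def by auto
qed

lemma pnorm_nonneg: "0 \<le> pnorm p a"
  unfolding pnorm_def by auto

lemma pnorm_le:
  assumes "\<forall>i<L. a i = 0" "1 \<le> p"
  shows "pnorm p a \<le> real p powr (- real_of_int L)"
proof (cases "\<forall>i. a i = 0")
  case True thus ?thesis unfolding pnorm_def by auto
next
  case False
  then obtain i where "a i \<noteq> 0" by auto
  moreover have "\<forall>j. a j \<noteq> 0 \<longrightarrow> L \<le> j" using assms by (meson not_le)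
  ultimately obtain m where m: "a m \<noteq> 0" "\<forall>j. a j \<noteq> 0 \<longrightarrow> m \<le> j"
    using int_least_exists[of "\<lambda>j. a j \<noteq> 0" i L] by blast
  have "L \<le> m" using m assms by (meson not_le)
  have "pnorm p a = real p powr (- real_of_int m)"
    by (rule pnorm_least) (use m in \<open>auto dest: leD\<close>)
  also have "\<dots> \<le> real p powr (- real_of_int L)"
    using \<open>L \<le> m\<close> assms by (intro powr_mono) auto
  finally show ?thesis .
qed

lemma pnorm_ge:
  assumes "a i \<noteq> 0" "padic p a" "1 \<le> p"
  shows "real p powr (- real_of_int i) \<le> pnorm p a"
proof -
  obtain N where N: "\<forall>i<N. a i = 0" using assms unfolding padic_def by auto
  have "\<forall>j. a j \<noteq> 0 \<longrightarrow> N \<le> j" using N by (meson not_le)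
  then obtain m where m: "a m \<noteq> 0" "\<forall>j. a j \<noteq> 0 \<longrightarrow> m \<le> j"
    using int_least_exists[of "\<lambda>j. a j \<noteq> 0" i N] assms by blast
  have "pnorm p a = real p powr (- real_of_int m)"
    by (rule pnorm_least) (use m in \<open>auto dest: leD\<close>)
  moreover have "m \<le> i" using m assms by auto
  ultimately show ?thesis using assms by (auto intro!: powr_mono)
qed

lemma vnorm_ge: "pnorm p (x j) \<le> vnorm p (x::'n::finite \<Rightarrow> padic)"
  unfolding vnorm_def by (rule Max_ge) auto

lemma vnorm_le: "(\<And>j. pnorm p (x j) \<le> c) \<Longrightarrow> vnorm p (x::'n::finite \<Rightarrow> padic) \<le> c"
  unfolding vnorm_def by (subst Max_le_iff) auto

lemma vnorm_nonneg: "0 \<le> vnorm p (x::'n::finite \<Rightarrow> padic)"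
  using vnorm_ge[of p x undefined] pnorm_nonneg[of p "x undefined"] by linarith

lemma tval_cong: "(\<And>i. i < k \<Longrightarrow> a i = b i) \<Longrightarrow> tval p k a = tval p k b"
proof -
  assume h: "\<And>i. i < k \<Longrightarrow> a i = b i"
  have "{i. i < k \<and> a i \<noteq> 0} = {i. i < k \<and> b i \<noteq> 0}" using h by auto
  thus ?thesis unfolding tval_def using h by (intro sum.cong) auto
qed

lemma tval_interval:
  assumes "\<forall>i<lo. a i = 0"
  shows "tval p k a = (\<Sum>i\<in>{lo..<k}. real (a i) * real p powr real_of_int i)"
  unfolding tval_def
proof (rule sum.mono_neutral_cong_left)
  show "{i. i < k \<and> a i \<noteq> 0} \<subseteq> {lo..<k}"
  proof
    fix i assume "i \<in> {i. i < k \<and> a i \<noteq> 0}"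
    thus "i \<in> {lo..<k}" using assms by (metis (mono_tags) atLeastLessThan_iff leI mem_Collect_eq)
  qed
qed auto

definition pint :: "nat \<Rightarrow> int \<Rightarrow> real \<Rightarrow> bool" where
  "pint p k v \<longleftrightarrow> v / real p powr real_of_int k \<in> \<int>"

lemma pint_add: "pint p k v \<Longrightarrow> pint p k w \<Longrightarrow> pint p k (v + w)"
  unfolding pint_def by (simp add: add_divide_distrib)

lemma pint_diff: "pint p k v \<Longrightarrow> pint p k w \<Longrightarrow> pint p k (v - w)"
  unfolding pint_def by (simp add: diff_divide_distrib)

lemma pint_0: "pint p k 0"
  unfolding pint_def by simp

lemma pint_sum: "(\<And>i. i \<in> A \<Longrightarrow> pint p k (f i)) \<Longrightarrow> pint p k (\<Sum>i\<in>A. f i)"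
  unfolding pint_def sum_divide_distrib by (rule Ints_sum)

lemma pint_mult:
  assumes "0 < p" "pint p k v" "pint p k' w"
  shows "pint p (k + k') (v * w)"
proof -
  have "v * w / real p powr real_of_int (k + k') =
        (v / real p powr real_of_int k) * (w / real p powr real_of_int k')"
    using assms by (simp add: powr_add)
  thus ?thesis using assms unfolding pint_def by (simp only:) (rule Ints_mult)
qed

lemma powr_int_Ints:
  assumes "0 < p" "0 \<le> d"
  shows "real p powr real_of_int d \<in> \<int>"
  using assms by (simp add: powr_real_of_int)

lemma pint_mono:
  assumes "0 < p" "pint p k v" "k' \<le> k"
  shows "pint p k' v"
proof -
  have "v / real p powr real_of_int k' = (v / real p powr real_of_int k) * real p powr real_of_int (k - k')"
    using assms by (simp add: powr_diff)
  thus ?thesis using assms powr_int_Ints[of p "k - k'"] unfolding pint_def by (simp only:) (rule Ints_mult, auto)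
qed

lemma pint_term:
  assumes "0 < p" "k \<le> i"
  shows "pint p k (real c * real p powr real_of_int i)"
proof -
  have "real c * real p powr real_of_int i / real p powr real_of_int k = real c * real p powr real_of_int (i - k)"
    using assms by (simp add: powr_diff)
  thus ?thesis using assms powr_int_Ints[of p "i - k"] unfolding pint_def by simp
qed

lemma pint_int: "0 < p \<Longrightarrow> v \<in> \<int> \<Longrightarrow> pint p 0 v"
  unfolding pint_def by simp

lemma cis_pint: "0 < p \<Longrightarrow> pint p 0 v \<Longrightarrow> cis (2 * pi * (u + v)) = cis (2 * pi * u)"
proof -
  assume "pint p 0 v" "0 < p"
  hence "v \<in> \<int>" unfolding pint_def using \<open>0 < p\<close> by simp
  hence "cis (2 * pi * v) = 1" by (rule cis_multiple_2pi)
  moreover have "cis (2 * pi * (u + v)) = cis (2 * pi * u) * cis (2 * pi * v)"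
    by (simp add: cis_mult distrib_left)
  ultimately show ?thesis by simp
qed

lemma tval_pint_low:
  assumes "0 < p" "\<forall>i<lo. a i = 0"
  shows "pint p lo (tval p k a)"
  unfolding tval_interval[OF assms(2)] by (rule pint_sum, rule pint_term) (use assms in auto)

lemma tval_pint_diff:
  assumes "0 < p" "\<forall>i<lo. a i = 0" "k \<le> k'"
  shows "pint p k (tval p k' a - tval p k a)"
proof -
  let ?lo = "min lo k"
  have z: "\<forall>i<?lo. a i = 0" using assms by auto
  have "tval p k' a = (\<Sum>i\<in>{?lo..<k}. real (a i) * real p powr real_of_int i) +
                     (\<Sum>i\<in>{k..<k'}. real (a i) * real p powr real_of_int i)"
    unfolding tval_interval[OF z] using assms
    by (subst sum.union_disjoint[symmetric]) (auto intro!: sum.cong)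
  hence "tval p k' a - tval p k a = (\<Sum>i\<in>{k..<k'}. real (a i) * real p powr real_of_int i)"
    unfolding tval_interval[OF z, of p k] by simp
  thus ?thesis by (simp, intro pint_sum pint_term) (use assms in auto)
qed

lemma tval_split:
  assumes "\<forall>i<lo. a i = 0" "k \<le> k'"
  shows "tval p k' a - tval p k a = (\<Sum>i\<in>{k..<k'}. real (a i) * real p powr real_of_int i)"
proof -
  let ?lo = "min lo k"
  have z: "\<forall>i<?lo. a i = 0" using assms by auto
  have "tval p k' a = (\<Sum>i\<in>{?lo..<k}. real (a i) * real p powr real_of_int i) +
                     (\<Sum>i\<in>{k..<k'}. real (a i) * real p powr real_of_int i)"
    unfolding tval_interval[OF z] using assms
    by (subst sum.union_disjoint[symmetric]) (auto intro!: sum.cong)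
  thus ?thesis unfolding tval_interval[OF z, of p k] by simp
qed

section \<open>Boxes, truncation, the character\<close>

definition zbox :: "nat \<Rightarrow> ('n \<Rightarrow> padic) set" where
  "zbox K = {x. \<forall>j i. i < - int K \<longrightarrow> x j i = 0}"

definition ztrunc :: "nat \<Rightarrow> ('n \<Rightarrow> padic) \<Rightarrow> ('n \<Rightarrow> padic)" where
  "ztrunc K x = (\<lambda>j i. if i < int K then x j i else 0)"

lemma box_mono: "x \<in> zbox M \<Longrightarrow> M \<le> M' \<Longrightarrow> x \<in> zbox M'"
  unfolding zbox_def by auto

lemma trunc_box: "x \<in> zbox M \<Longrightarrow> ztrunc K x \<in> zbox M"
  unfolding zbox_def ztrunc_def by auto

lemma trunc_qpv: "x \<in> qpv p \<Longrightarrow> ztrunc K x \<in> qpv p"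
proof -
  assume "x \<in> qpv p"
  hence h: "\<forall>j. (\<forall>i. x j i < p) \<and> (\<exists>N. \<forall>i<N. x j i = 0)" unfolding qpv_def padic_def by auto
  have "0 < p" using h by (metis not_less0 gr0I)
  show ?thesis unfolding qpv_def padic_def ztrunc_def using h \<open>0<p\<close> by fastforce
qed

lemma box_low: "x \<in> zbox M \<Longrightarrow> \<forall>i < - int M. x j i = 0"
  unfolding zbox_def by auto

definition Sd :: "nat \<Rightarrow> nat \<Rightarrow> ('n::finite \<Rightarrow> padic) \<Rightarrow> ('n \<Rightarrow> padic) \<Rightarrow> real" where
  "Sd p N \<xi> x = (\<Sum>j\<in>UNIV. tval p (int N) (\<xi> j) * tval p (int N) (x j))"

lemma Sd_const:
  assumes "0 < p" "\<xi> \<in> zbox M1" "x \<in> zbox M2" "max M1 M2 \<le> N" "N \<le> N'"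
  shows "pint p 0 (Sd p N' \<xi> x - Sd p N \<xi> x)"
proof -
  have "Sd p N' \<xi> x - Sd p N \<xi> x = (\<Sum>j\<in>UNIV.
      (tval p (int N') (\<xi> j) - tval p (int N) (\<xi> j)) * tval p (int N') (x j) +
      tval p (int N) (\<xi> j) * (tval p (int N') (x j) - tval p (int N) (x j)))"
    unfolding Sd_def sum_subtractf[symmetric] by (intro sum.cong) (auto simp: algebra_simps)
  also have "pint p 0 \<dots>"
  proof (intro pint_sum pint_add)
    fix j :: 'a
    have a1: "pint p (int N) (tval p (int N') (\<xi> j) - tval p (int N) (\<xi> j))"
      by (rule tval_pint_diff[OF assms(1) box_low[OF assms(2)]]) (use assms in auto)
    have a2: "pint p (- int M2) (tval p (int N') (x j))"
      by (rule tval_pint_low[OF assms(1) box_low[OF assms(3)]])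
    show "pint p 0 ((tval p (int N') (\<xi> j) - tval p (int N) (\<xi> j)) * tval p (int N') (x j))"
      using pint_mult[OF assms(1) a1 a2] by (rule pint_mono[OF assms(1)]) (use assms in auto)
    have b1: "pint p (int N) (tval p (int N') (x j) - tval p (int N) (x j))"
      by (rule tval_pint_diff[OF assms(1) box_low[OF assms(3)]]) (use assms in auto)
    have b2: "pint p (- int M1) (tval p (int N) (\<xi> j))"
      by (rule tval_pint_low[OF assms(1) box_low[OF assms(2)]])
    show "pint p 0 (tval p (int N) (\<xi> j) * (tval p (int N') (x j) - tval p (int N) (x j)))"
      using pint_mult[OF assms(1) b2 b1] by (rule pint_mono[OF assms(1)]) (use assms in auto)
  qed
  finally show ?thesis .
qed

lemma chi_eq:
  assumes "0 < p" "\<xi> \<in> zbox M1" "x \<in> zbox M2" "max M1 M2 \<le> N"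
  shows "chi p \<xi> x = cis (2 * pi * Sd p N \<xi> x)"
proof -
  have ev: "eventually (\<lambda>N'. cis (2 * pi * Sd p N' \<xi> x) = cis (2 * pi * Sd p N \<xi> x)) sequentially"
    unfolding eventually_sequentially
  proof (intro exI allI impI)
    fix N' assume "N \<le> N'"
    have "cis (2 * pi * (Sd p N \<xi> x + (Sd p N' \<xi> x - Sd p N \<xi> x))) = cis (2 * pi * Sd p N \<xi> x)"
      by (rule cis_pint[OF assms(1) Sd_const[OF assms \<open>N \<le> N'\<close>]])
    thus "cis (2 * pi * Sd p N' \<xi> x) = cis (2 * pi * Sd p N \<xi> x)" by simp
  qed
  have "(\<lambda>N'. cis (2 * pi * Sd p N' \<xi> x)) \<longlonglongrightarrow> cis (2 * pi * Sd p N \<xi> x)"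
    by (rule tendsto_eventually[OF ev])
  hence "lim (\<lambda>N'. cis (2 * pi * Sd p N' \<xi> x)) = cis (2 * pi * Sd p N \<xi> x)" by (rule limI)
  thus ?thesis unfolding chi_def Sd_def .
qed

lemma chi_change:
  assumes "0 < p" "\<xi> \<in> zbox M1" "x \<in> zbox M2" "\<xi>' \<in> zbox M1" "x' \<in> zbox M2" "max M1 M2 \<le> N"
    and "pint p 0 (Sd p N \<xi> x - Sd p N \<xi>' x')"
  shows "chi p \<xi> x = chi p \<xi>' x'"
proof -
  have "chi p \<xi> x = cis (2 * pi * (Sd p N \<xi>' x' + (Sd p N \<xi> x - Sd p N \<xi>' x')))"
    using chi_eq[OF assms(1,2,3,6)] by simp
  also have "\<dots> = cis (2 * pi * Sd p N \<xi>' x')" by (rule cis_pint[OF assms(1,7)])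
  also have "\<dots> = chi p \<xi>' x'" using chi_eq[OF assms(1,4,5,6)] by simp
  finally show ?thesis .
qed

lemma tval_trunc:
  assumes "\<forall>i<lo. a i = 0" "K \<le> k"
  shows "tval p k (\<lambda>i. if i < K then a i else 0) = tval p K a"
proof -
  have z: "\<forall>i<lo. (\<lambda>i. if i < K then a i else 0) i = 0" using assms by auto
  have "tval p k (\<lambda>i. if i < K then a i else 0) - tval p K (\<lambda>i. if i < K then a i else 0) = 0"
    unfolding tval_split[OF z assms(2)] by (intro sum.neutral) auto
  moreover have "tval p K (\<lambda>i. if i < K then a i else 0) = tval p K a" by (rule tval_cong) auto
  ultimately show ?thesis by simp
qed

lemma chi_trunc_x:
  assumes "0 < p" "\<xi> \<in> zbox M" "x \<in> zbox M2" "M \<le> K"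
  shows "chi p \<xi> x = chi p \<xi> (ztrunc K x)"
proof (rule chi_change[OF assms(1,2,3,2) trunc_box[OF assms(3)]])
  let ?N = "max (max M M2) K"
  show "max M M2 \<le> ?N" by simp
  have "Sd p ?N \<xi> x - Sd p ?N \<xi> (ztrunc K x) =
    (\<Sum>j\<in>UNIV. tval p (int ?N) (\<xi> j) * (tval p (int ?N) (x j) - tval p (int K) (x j)))"
    unfolding Sd_def sum_subtractf[symmetric]
  proof (intro sum.cong refl)
    fix j
    have "tval p (int ?N) (ztrunc K x j) = tval p (int K) (x j)"
      unfolding ztrunc_def by (rule tval_trunc[OF box_low[OF assms(3)]]) auto
    thus "tval p (int ?N) (\<xi> j) * tval p (int ?N) (x j) - tval p (int ?N) (\<xi> j) * tval p (int ?N) (ztrunc K x j) =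
      tval p (int ?N) (\<xi> j) * (tval p (int ?N) (x j) - tval p (int K) (x j))"
      by (simp add: algebra_simps)
  qed
  also have "pint p 0 \<dots>"
  proof (intro pint_sum)
    fix j :: 'a
    have b1: "pint p (int K) (tval p (int ?N) (x j) - tval p (int K) (x j))"
      by (rule tval_pint_diff[OF assms(1) box_low[OF assms(3)]]) auto
    have b2: "pint p (- int M) (tval p (int ?N) (\<xi> j))"
      by (rule tval_pint_low[OF assms(1) box_low[OF assms(2)]])
    show "pint p 0 (tval p (int ?N) (\<xi> j) * (tval p (int ?N) (x j) - tval p (int K) (x j)))"
      using pint_mult[OF assms(1) b2 b1] by (rule pint_mono[OF assms(1)]) (use assms in auto)
  qed
  finally show "pint p 0 (Sd p ?N \<xi> x - Sd p ?N \<xi> (ztrunc K x))" .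
qed

lemma chi_trunc_xi:
  assumes "0 < p" "\<xi> \<in> zbox M1" "x \<in> zbox K"
  shows "chi p \<xi> x = chi p (ztrunc K \<xi>) x"
proof (rule chi_change[OF assms(1,2,3) trunc_box[OF assms(2)] assms(3)])
  let ?N = "max M1 K"
  show "max M1 K \<le> ?N" by simp
  have "Sd p ?N \<xi> x - Sd p ?N (ztrunc K \<xi>) x =
    (\<Sum>j\<in>UNIV. (tval p (int ?N) (\<xi> j) - tval p (int K) (\<xi> j)) * tval p (int ?N) (x j))"
    unfolding Sd_def sum_subtractf[symmetric]
  proof (intro sum.cong refl)
    fix j
    have "tval p (int ?N) (ztrunc K \<xi> j) = tval p (int K) (\<xi> j)"
      unfolding ztrunc_def by (rule tval_trunc[OF box_low[OF assms(2)]]) auto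
    thus "tval p (int ?N) (\<xi> j) * tval p (int ?N) (x j) - tval p (int ?N) (ztrunc K \<xi> j) * tval p (int ?N) (x j) =
      (tval p (int ?N) (\<xi> j) - tval p (int K) (\<xi> j)) * tval p (int ?N) (x j)"
      by (simp add: algebra_simps)
  qed
  also have "pint p 0 \<dots>"
  proof (intro pint_sum)
    fix j :: 'a
    have b1: "pint p (int K) (tval p (int ?N) (\<xi> j) - tval p (int K) (\<xi> j))"
      by (rule tval_pint_diff[OF assms(1) box_low[OF assms(2)]]) auto
    have b2: "pint p (- int K) (tval p (int ?N) (x j))"
      by (rule tval_pint_low[OF assms(1) box_low[OF assms(3)]])
    show "pint p 0 ((tval p (int ?N) (\<xi> j) - tval p (int K) (\<xi> j)) * tval p (int ?N) (x j))"
      using pint_mult[OF assms(1) b1 b2] by simp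
  qed
  finally show "pint p 0 (Sd p ?N \<xi> x - Sd p ?N (ztrunc K \<xi>) x)" .
qed

section \<open>Cylinder functions and the Haar integral\<close>

definition cyl :: "nat \<Rightarrow> nat \<Rightarrow> (('n \<Rightarrow> padic) \<Rightarrow> 'a::zero) \<Rightarrow> bool" where
  "cyl p K g \<longleftrightarrow> (\<forall>x\<in>qpv p. g x = (if x \<in> zbox K then g (ztrunc K x) else 0))"

lemma trunc_trunc: "K \<le> K' \<Longrightarrow> ztrunc K (ztrunc K' x) = ztrunc K x"
  unfolding ztrunc_def by (auto simp: fun_eq_iff)

lemma trunc_box_iff: "ztrunc K' x \<in> zbox K \<longleftrightarrow> x \<in> zbox K"
proof -
  have "\<forall>j i. i < - int K \<longrightarrow> ztrunc K' x j i = x j i" unfolding ztrunc_def by auto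
  thus ?thesis unfolding zbox_def by auto
qed

lemma cyl_mono:
  fixes g :: "('n \<Rightarrow> padic) \<Rightarrow> 'a::zero"
  assumes "cyl p K g" "K \<le> K'"
  shows "cyl p K' g"
  unfolding cyl_def
proof
  fix x :: "'n \<Rightarrow> padic" assume x: "x \<in> qpv p"
  have tq: "ztrunc K' x \<in> qpv p" by (rule trunc_qpv[OF x])
  show "g x = (if x \<in> zbox K' then g (ztrunc K' x) else 0)"
  proof (cases "x \<in> zbox K")
    case True
    hence "g x = g (ztrunc K x)" using assms x unfolding cyl_def by auto
    moreover have "g (ztrunc K' x) = g (ztrunc K x)"
      using assms(1) tq True trunc_box_iff[of K' x K] trunc_trunc[OF assms(2), of x]
      unfolding cyl_def by auto
    moreover have "x \<in> zbox K'" using True box_mono assms by blast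
    ultimately show ?thesis by simp
  next
    case False
    hence "g x = 0" using assms x unfolding cyl_def by auto
    moreover have "g (ztrunc K' x) = 0"
      using assms(1) tq False trunc_box_iff[of K' x K] unfolding cyl_def by auto
    ultimately show ?thesis by simp
  qed
qed

lemma reps_qpv: "reps p k \<subseteq> qpv p"
  unfolding reps_def by auto

lemma finite_reps: "finite (reps p k :: ('n::finite \<Rightarrow> padic) set)"
proof -
  let ?I = "(UNIV :: 'n set) \<times> {- int k..<int k}"
  let ?h = "\<lambda>d::('n \<times> int) \<Rightarrow> nat. \<lambda>j i. if - int k \<le> i \<and> i < int k then d (j, i) else 0"
  have "reps p k \<subseteq> ?h ` (PiE ?I (\<lambda>_. {..<p}))"
  proof
    fix x :: "'n \<Rightarrow> padic" assume x: "x \<in> reps p k"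
    have "x = ?h (restrict (\<lambda>(j, i). x j i) ?I)"
    proof (intro ext)
      fix j i
      show "x j i = ?h (restrict (\<lambda>(j, i). x j i) ?I) j i"
        using x unfolding reps_def by (cases "- int k \<le> i \<and> i < int k") auto
    qed
    moreover have "restrict (\<lambda>(j, i). x j i) ?I \<in> PiE ?I (\<lambda>_. {..<p})"
      using x unfolding reps_def qpv_def padic_def by (auto simp: PiE_iff)
    ultimately show "x \<in> ?h ` (PiE ?I (\<lambda>_. {..<p}))" by blast
  qed
  moreover have "finite (PiE ?I (\<lambda>_. {..<p}))" by (intro finite_PiE) auto
  ultimately show ?thesis using finite_subset finite_imageI by blast
qed

lemma fiber_card:
  fixes y :: "'n::finite \<Rightarrow> padic"
  assumes y: "y \<in> reps p K" and Kk: "K \<le> k"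
  shows "card {x \<in> reps p k \<inter> zbox K. ztrunc K x = y} = p ^ (CARD('n::finite) * (k - K))"
proof -
  let ?F = "{x \<in> reps p k \<inter> zbox K. ztrunc K x = (y :: 'n \<Rightarrow> padic)}"
  let ?I = "(UNIV :: 'n set) \<times> {int K..<int k}"
  let ?P = "PiE ?I (\<lambda>_. {..<p})"
  let ?f = "\<lambda>x::'n \<Rightarrow> padic. restrict (\<lambda>(j, i). x j i) ?I"
  let ?g = "\<lambda>d::('n \<times> int) \<Rightarrow> nat. \<lambda>j i. if i < int K then y j i else if i < int k then d (j, i) else 0"
  have yq: "\<forall>j i. y j i < p" and yz: "\<forall>j i. (i < - int K \<or> int K \<le> i) \<longrightarrow> y j i = 0"
    using y unfolding reps_def qpv_def padic_def by auto
  have "bij_betw ?f ?F ?P"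
  proof (rule bij_betw_byWitness[where f'="?g"])
    show "\<forall>x\<in>?F. ?g (?f x) = x"
    proof
      fix x assume x: "x \<in> ?F"
      hence tx: "ztrunc K x = y" and xz: "\<forall>j i. (i < - int k \<or> int k \<le> i) \<longrightarrow> x j i = 0"
        unfolding reps_def by auto
      show "?g (?f x) = x"
      proof (intro ext)
        fix j i
        show "?g (?f x) j i = x j i"
        proof (cases "i < int K")
          case True
          thus ?thesis using fun_cong[OF fun_cong[OF tx, of j], of i] unfolding ztrunc_def by simp
        next
          case False
          thus ?thesis using xz by auto
        qed
      qed
    qed
    show "\<forall>d\<in>?P. ?f (?g d) = d"
    proof
      fix d assume d: "d \<in> ?P"
      show "?f (?g d) = d"
      proof (intro ext)
        fix ji :: "'n \<times> int"
        obtain j i where ji: "ji = (j, i)" by (cases ji)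
        show "?f (?g d) ji = d ji"
        proof (cases "(j, i) \<in> ?I")
          case True thus ?thesis unfolding ji by (simp add: restrict_def)
        next
          case False
          have "d (j, i) = undefined" by (rule PiE_arb[OF d False])
          thus ?thesis using False unfolding ji restrict_def by simp
        qed
      qed
    qed
    show "?f ` ?F \<subseteq> ?P"
    proof
      fix z assume "z \<in> ?f ` ?F"
      then obtain x where x: "x \<in> ?F" and z: "z = ?f x" by auto
      have "\<forall>j i. x j i < p" using x unfolding reps_def qpv_def padic_def by auto
      thus "z \<in> ?P" unfolding z by (auto simp: PiE_iff)
    qed
    show "?g ` ?P \<subseteq> ?F"
    proof
      fix z assume "z \<in> ?g ` ?P"
      then obtain d where d: "d \<in> ?P" and z: "z = ?g d" by auto
      have zji: "\<And>j i. z j i = (if i < int K then y j i else if i < int k then d (j, i) else 0)"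
        unfolding z by simp
      have dp: "\<And>j i. int K \<le> i \<Longrightarrow> i < int k \<Longrightarrow> d (j, i) < p" using d by auto
      have p0: "0 < p" using yq by (metis not_less0 gr0I)
      have zp: "\<And>j i. z j i < p"
      proof -
        fix j i
        show "z j i < p"
        proof (cases "i < int K")
          case True thus ?thesis using yq zji by simp
        next
          case False
          thus ?thesis using dp[of i j] p0 zji[of j i] by (cases "i < int k") auto
        qed
      qed
      have zlow: "\<And>j i. i < - int K \<Longrightarrow> z j i = 0"
      proof -
        fix j i assume "i < - int K"
        hence "i < int K" "y j i = 0" using yz by auto
        thus "z j i = 0" using zji by simp
      qed
      have zhigh: "\<And>j i. int k \<le> i \<Longrightarrow> z j i = 0"
      proof -
        fix j i assume "int k \<le> i"
        hence "\<not> i < int K" "\<not> i < int k" using Kk by auto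
        thus "z j i = 0" using zji by simp
      qed
      have zq: "z \<in> qpv p" unfolding qpv_def padic_def
        using zp zlow by blast
      have zr: "z \<in> reps p k" unfolding reps_def
      proof (intro CollectI conjI zq allI impI)
        fix j i assume "i < - int k \<or> int k \<le> i"
        thus "z j i = 0"
        proof
          assume "i < - int k" hence "i < - int K" using Kk by auto
          thus ?thesis by (rule zlow)
        qed (rule zhigh)
      qed
      have zb: "z \<in> zbox K" unfolding zbox_def using zlow by blast
      have zt: "ztrunc K z = y"
      proof (intro ext)
        fix j i
        show "ztrunc K z j i = y j i"
        proof (cases "i < int K")
          case True thus ?thesis unfolding ztrunc_def using zji by simp
        next
          case False thus ?thesis unfolding ztrunc_def using yz by simp
        qed
      qed
      show "z \<in> ?F" using zr zb zt by auto
    qed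
  qed
  hence "card ?F = card ?P" by (rule bij_betw_same_card)
  also have "\<dots> = p ^ card ?I" by (simp add: card_PiE)
  also have "card ?I = CARD('n) * (k - K)" by (simp add: card_cartesian_product)
  finally show ?thesis .
qed

lemma sum_reps:
  fixes g :: "('n::finite \<Rightarrow> padic) \<Rightarrow> 'a::real_vector"
  assumes "cyl p K g" "K \<le> k"
  shows "(\<Sum>x\<in>reps p k. g x) = real (p ^ (CARD('n) * (k - K))) *\<^sub>R (\<Sum>y\<in>reps p K. g y)"
proof -
  let ?A = "reps p k \<inter> zbox K :: ('n \<Rightarrow> padic) set"
  have "(\<Sum>x\<in>reps p k. g x) = (\<Sum>x\<in>?A. g x)"
  proof (rule sum.mono_neutral_right)
    show "finite (reps p k :: ('n \<Rightarrow> padic) set)" by (rule finite_reps)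
    show "?A \<subseteq> reps p k" by auto
    show "\<forall>x\<in>reps p k - ?A. g x = 0"
    proof
      fix x :: "'n \<Rightarrow> padic" assume "x \<in> reps p k - ?A"
      hence "x \<in> qpv p" "x \<notin> zbox K" using reps_qpv by auto
      thus "g x = 0" using assms(1) unfolding cyl_def by auto
    qed
  qed
  also have "\<dots> = (\<Sum>y\<in>reps p K. \<Sum>x\<in>{x \<in> ?A. ztrunc K x = y}. g x)"
  proof (rule sum.group[symmetric])
    show "finite ?A" by (meson finite_Int finite_reps)
    show "finite (reps p K :: ('n \<Rightarrow> padic) set)" by (rule finite_reps)
    show "ztrunc K ` ?A \<subseteq> reps p K"
    proof
      fix z assume "z \<in> ztrunc K ` ?A"
      then obtain x where x: "x \<in> ?A" and z: "z = ztrunc K x" by auto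
      show "z \<in> reps p K" unfolding reps_def z
        using x trunc_qpv[of x p K] unfolding reps_def zbox_def ztrunc_def by auto
    qed
  qed
  also have "\<dots> = (\<Sum>y\<in>reps p K. real (p ^ (CARD('n) * (k - K))) *\<^sub>R g y)"
  proof (rule sum.cong[OF refl])
    fix y :: "'n \<Rightarrow> padic" assume y: "y \<in> reps p K"
    have "(\<Sum>x\<in>{x \<in> ?A. ztrunc K x = y}. g x) = (\<Sum>x\<in>{x \<in> ?A. ztrunc K x = y}. g y)"
    proof (intro sum.cong refl)
      fix x assume "x \<in> {x \<in> ?A. ztrunc K x = y}"
      hence "x \<in> qpv p" "x \<in> zbox K" "ztrunc K x = y" using reps_qpv by auto
      thus "g x = g y" using assms(1) unfolding cyl_def by auto
    qed
    also have "\<dots> = real (card {x \<in> ?A. ztrunc K x = y}) *\<^sub>R g y" by (rule sum_constant_scaleR)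
    finally show "(\<Sum>x\<in>{x \<in> ?A. ztrunc K x = y}. g x) = real (p ^ (CARD('n) * (k - K))) *\<^sub>R g y"
      using fiber_card[OF y assms(2)] by simp
  qed
  also have "\<dots> = real (p ^ (CARD('n) * (k - K))) *\<^sub>R (\<Sum>y\<in>reps p K. g y)"
    by (simp add: scaleR_sum_right)
  finally show ?thesis .
qed

definition hsum :: "nat \<Rightarrow> nat \<Rightarrow> (('n::finite \<Rightarrow> padic) \<Rightarrow> 'a::real_normed_vector) \<Rightarrow> 'a" where
  "hsum p K g = (real p powr (- (real K * real CARD('n)))) *\<^sub>R (\<Sum>x\<in>reps p K. g x)"

lemma haar_cyl:
  fixes g :: "('n::finite \<Rightarrow> padic) \<Rightarrow> 'a::real_normed_vector"
  assumes "0 < p" "cyl p K g"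
  shows "haar_int p g = hsum p K g"
proof -
  have ev: "eventually (\<lambda>k. (real p powr (- (real k * real CARD('n)))) *\<^sub>R (\<Sum>x\<in>reps p k. g x) = hsum p K g) sequentially"
    unfolding eventually_sequentially
  proof (intro exI allI impI)
    fix k assume "K \<le> k"
    have "(real p powr (- (real k * real CARD('n)))) * real (p ^ (CARD('n) * (k - K))) =
          real p powr (- (real K * real CARD('n)))"
    proof -
      have "real (p ^ (CARD('n) * (k - K))) = real p powr (real CARD('n) * (real k - real K))"
        using assms(1) \<open>K \<le> k\<close> by (simp add: powr_realpow[symmetric] of_nat_diff)
      moreover have e: "- (real k * real CARD('n)) + real CARD('n) * (real k - real K) = - (real K * real CARD('n))"
        by (simp add: algebra_simps)
      moreover have "real p powr (- (real k * real CARD('n))) * real p powr (real CARD('n) * (real k - real K))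
          = real p powr (- (real K * real CARD('n)))"
        by (simp only: powr_add[symmetric] e)
      ultimately show ?thesis by simp
    qed
    thus "(real p powr (- (real k * real CARD('n)))) *\<^sub>R (\<Sum>x\<in>reps p k. g x) = hsum p K g"
      unfolding sum_reps[OF assms(2) \<open>K \<le> k\<close>] hsum_def by simp
  qed
  show ?thesis unfolding haar_int_def by (rule limI, rule tendsto_eventually[OF ev])
qed

section \<open>Fourier transform of cylinder functions\<close>

lemma qpv_box: "x \<in> qpv p \<Longrightarrow> \<exists>M. x \<in> zbox (M::nat) \<and> (x :: 'n::finite \<Rightarrow> padic) \<in> qpv p"
proof -
  assume x: "x \<in> qpv p"
  hence "\<forall>j. \<exists>N. \<forall>i<N. x j i = 0" unfolding qpv_def padic_def by auto
  then obtain N where N: "\<And>j. \<forall>i<N j. x j i = 0" by metis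
  let ?M = "nat (Max (range (\<lambda>j. - N j)))"
  have "x \<in> zbox ?M" unfolding zbox_def
  proof (intro CollectI allI impI)
    fix j i assume "i < - int ?M"
    have "- N j \<le> Max (range (\<lambda>j. - N j))" by (rule Max_ge) auto
    hence "i < N j" using \<open>i < - int ?M\<close> by linarith
    thus "x j i = 0" using N by auto
  qed
  thus ?thesis using x by blast
qed

lemma haar_cong:
  assumes "\<And>x. x \<in> qpv p \<Longrightarrow> g x = h x"
  shows "haar_int p g = haar_int p h"
proof -
  have "\<And>k. (\<Sum>x\<in>reps p k. g x) = (\<Sum>x\<in>reps p k. h x)"
    using assms reps_qpv by (intro sum.cong) auto
  thus ?thesis unfolding haar_int_def by simp
qed

lemma cyl_diff:
  fixes f g :: "('n \<Rightarrow> padic) \<Rightarrow> 'a::ab_group_add"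
  assumes "cyl p K f" "cyl p K g"
  shows "cyl p K (f - g)"
  using assms unfolding cyl_def by auto

lemma chi_phi_cyl:
  fixes \<phi> :: "('n::finite \<Rightarrow> padic) \<Rightarrow> complex"
  assumes "0 < p" "cyl p K \<phi>" "\<xi> \<in> zbox M"
  shows "cyl p (max K M) (\<lambda>x. chi p \<xi> x * \<phi> x)"
  unfolding cyl_def
proof
  fix x :: "'n \<Rightarrow> padic" assume x: "x \<in> qpv p"
  have c: "cyl p (max K M) \<phi>" by (rule cyl_mono[OF assms(2)]) auto
  show "chi p \<xi> x * \<phi> x = (if x \<in> zbox (max K M) then chi p \<xi> (ztrunc (max K M) x) * \<phi> (ztrunc (max K M) x) else 0)"
  proof (cases "x \<in> zbox (max K M)")
    case True
    have "chi p \<xi> x = chi p \<xi> (ztrunc (max K M) x)"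
      by (rule chi_trunc_x[OF assms(1,3) True]) auto
    moreover have "\<phi> x = \<phi> (ztrunc (max K M) x)" using c x True unfolding cyl_def by auto
    ultimately show ?thesis using True by simp
  next
    case False
    thus ?thesis using c x unfolding cyl_def by auto
  qed
qed

lemma hat_formula:
  fixes \<phi> :: "('n::finite \<Rightarrow> padic) \<Rightarrow> complex"
  assumes "0 < p" "cyl p K \<phi>" "\<xi> \<in> qpv p" "\<xi> \<in> zbox M" "max K M \<le> K'"
  shows "hat p \<phi> \<xi> = hsum p K' (\<lambda>x. chi p \<xi> x * \<phi> x)"
proof -
  have "cyl p K' (\<lambda>x. chi p \<xi> x * \<phi> x)"
    by (rule cyl_mono[OF chi_phi_cyl[OF assms(1,2,4)] assms(5)])
  thus ?thesis unfolding hat_def using assms(3) haar_cyl[OF assms(1)] by simp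
qed

lemma hat_trunc:
  fixes \<phi> :: "('n::finite \<Rightarrow> padic) \<Rightarrow> complex"
  assumes "0 < p" "cyl p K \<phi>" "\<xi> \<in> qpv p" "\<xi> \<in> zbox K"
  shows "hat p \<phi> \<xi> = hat p \<phi> (ztrunc K \<xi>)"
proof -
  have "haar_int p (\<lambda>x. chi p \<xi> x * \<phi> x) = haar_int p (\<lambda>x. chi p (ztrunc K \<xi>) x * \<phi> x)"
  proof (rule haar_cong)
    fix x :: "'n \<Rightarrow> padic" assume x: "x \<in> qpv p"
    show "chi p \<xi> x * \<phi> x = chi p (ztrunc K \<xi>) x * \<phi> x"
    proof (cases "x \<in> zbox K")
      case True
      thus ?thesis using chi_trunc_xi[OF assms(1,4) True] by simp
    next
      case False
      thus ?thesis using assms(2) x unfolding cyl_def by auto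
    qed
  qed
  thus ?thesis unfolding hat_def using assms(3) trunc_qpv[OF assms(3)] by simp
qed

lemma root_sum_zero:
  assumes "0 < c" "c < p"
  shows "(\<Sum>d<p. cis (2 * pi * real c / real p) ^ d) = 0"
proof -
  let ?w = "cis (2 * pi * real c / real p)"
  have "?w \<noteq> 1"
  proof
    assume "?w = 1"
    hence "cos (2 * pi * real c / real p) = 1" by (metis Re_complex_of_real cis.sel(1) one_complex.sel(1))
    then obtain z :: int where z: "2 * pi * real c / real p = real_of_int z * 2 * pi"
      using cos_one_2pi_int by blast
    hence h2: "(2 * pi) * (real c / real p) = (2 * pi) * real_of_int z"
      by (metis times_divide_eq_right mult.commute mult.assoc)
    have "(2::real) * pi \<noteq> 0" by simp
    hence "real c / real p = real_of_int z" using h2 by (rule mult_left_cancel[THEN iffD1])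
    moreover have "0 < real c / real p" "real c / real p < 1" using assms by auto
    ultimately show False by (metis of_int_0_less_iff of_int_less_1_iff zero_less_one_class.zero_le_one not_le int_one_le_iff_zero_less)
  qed
  moreover have "?w ^ p = 1"
  proof -
    have "?w ^ p = cis (real p * (2 * pi * real c / real p))" by (rule Complex.DeMoivre)
    also have "\<dots> = cis (2 * pi * real c)" using assms by simp
    also have "\<dots> = 1" by (rule cis_multiple_2pi) simp
    finally show ?thesis .
  qed
  ultimately show ?thesis by (simp add: geometric_sum)
qed

definition zupd :: "'n \<Rightarrow> int \<Rightarrow> ('n \<Rightarrow> padic) \<Rightarrow> nat \<Rightarrow> ('n \<Rightarrow> padic)" where
  "zupd j0 i1 x d = x(j0 := (x j0)(i1 := d))"

lemma tval_upd:
  assumes "a i1 = 0" "\<forall>i<lo. a i = 0" "lo \<le> i1" "i1 < N"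
  shows "tval p N (a(i1 := d)) = tval p N a + real d * real p powr real_of_int i1"
proof -
  have z': "\<forall>i<lo. (a(i1 := d)) i = 0" using assms by auto
  have fin: "finite {lo..<N}" and mem: "i1 \<in> {lo..<N}" using assms by auto
  have "tval p N (a(i1 := d)) = real d * real p powr real_of_int i1 +
      (\<Sum>i\<in>{lo..<N} - {i1}. real ((a(i1 := d)) i) * real p powr real_of_int i)"
    unfolding tval_interval[OF z'] by (subst sum.remove[OF fin mem]) simp
  also have "(\<Sum>i\<in>{lo..<N} - {i1}. real ((a(i1 := d)) i) * real p powr real_of_int i) =
      (\<Sum>i\<in>{lo..<N} - {i1}. real (a i) * real p powr real_of_int i)"
    by (intro sum.cong) auto
  also have "\<dots> = tval p N a"
  proof -
    have "tval p N a = real (a i1) * real p powr real_of_int i1 +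
       (\<Sum>i\<in>{lo..<N} - {i1}. real (a i) * real p powr real_of_int i)"
      unfolding tval_interval[OF assms(2)] by (rule sum.remove[OF fin mem])
    thus ?thesis using assms(1) by simp
  qed
  finally show ?thesis by (simp add: fun_upd_def add.commute)
qed

lemma Sd_upd:
  fixes x :: "'n::finite \<Rightarrow> padic"
  assumes "x j0 i1 = 0" "\<forall>i<lo. x j0 i = 0" "lo \<le> i1" "i1 < int N"
  shows "Sd p N \<xi> (zupd j0 i1 x d) = Sd p N \<xi> x + tval p (int N) (\<xi> j0) * (real d * real p powr real_of_int i1)"
proof -
  have "Sd p N \<xi> (zupd j0 i1 x d) = (\<Sum>j\<in>UNIV. tval p (int N) (\<xi> j) * tval p (int N) (x j) +
      (if j = j0 then tval p (int N) (\<xi> j) * (real d * real p powr real_of_int i1) else 0))"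
    unfolding Sd_def zupd_def
  proof (intro sum.cong refl)
    fix j
    show "tval p (int N) (\<xi> j) * tval p (int N) ((x(j0 := (x j0)(i1 := d))) j) =
      tval p (int N) (\<xi> j) * tval p (int N) (x j) +
      (if j = j0 then tval p (int N) (\<xi> j) * (real d * real p powr real_of_int i1) else 0)"
    proof (cases "j = j0")
      case True
      thus ?thesis using tval_upd[OF assms, of p d] by (simp add: algebra_simps)
    qed simp
  qed
  also have "\<dots> = Sd p N \<xi> x + tval p (int N) (\<xi> j0) * (real d * real p powr real_of_int i1)"
    unfolding sum.distrib Sd_def by (simp add: sum.delta)
  finally show ?thesis .
qed

lemma tval_lowest:
  assumes "0 < p" "a m \<noteq> 0" "\<forall>i<m. a i = 0" "m < N"
  shows "pint p (m + 1) (tval p N a - real (a m) * real p powr real_of_int m)"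
proof -
  have "tval p (m + 1) a = (\<Sum>i\<in>{m..<m+1}. real (a i) * real p powr real_of_int i)"
    by (rule tval_interval[OF assms(3)])
  also have "{m..<m+1} = {m}" by auto
  finally have "tval p (m + 1) a = real (a m) * real p powr real_of_int m" by simp
  moreover have "pint p (m + 1) (tval p N a - tval p (m + 1) a)"
    by (rule tval_pint_diff[OF assms(1,3)]) (use assms in auto)
  ultimately show ?thesis by simp
qed

lemma hat_zero:
  fixes \<phi> :: "('n::finite \<Rightarrow> padic) \<Rightarrow> complex"
  assumes p1: "1 < p" and cyl: "cyl p K \<phi>" and \<xi>q: "\<xi> \<in> qpv p" and \<xi>nb: "\<xi> \<notin> zbox K"
  shows "hat p \<phi> \<xi> = 0"
proof -
  have p0: "0 < p" using p1 by auto
  obtain j0 i0 where i0: "i0 < - int K" "\<xi> j0 i0 \<noteq> 0" using \<xi>nb unfolding zbox_def by auto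
  obtain N0 where N0: "\<forall>i<N0. \<xi> j0 i = 0" using \<xi>q unfolding qpv_def padic_def by blast
  have "\<forall>j. \<xi> j0 j \<noteq> 0 \<longrightarrow> N0 \<le> j" using N0 by (meson not_le)
  then obtain m where m: "\<xi> j0 m \<noteq> 0" "\<forall>j. \<xi> j0 j \<noteq> 0 \<longrightarrow> m \<le> j"
    using int_least_exists[of "\<lambda>j. \<xi> j0 j \<noteq> 0" i0 N0] i0 by blast
  have mlow: "\<forall>i<m. \<xi> j0 i = 0" using m(2) by (meson not_le)
  have "m \<le> i0" using m i0 by auto
  define i1 where "i1 = - m - 1"
  have i1K: "int K \<le> i1" using \<open>m \<le> i0\<close> i0 unfolding i1_def by linarith
  obtain M where M: "\<xi> \<in> zbox M" using qpv_box[OF \<xi>q] by blast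
  define K' where "K' = max (max K M) (nat i1 + 1)"
  have i1K': "i1 < int K'" and K'K: "K \<le> K'" and K'M: "max K M \<le> K'" unfolding K'_def using i1K by auto
  have i1pos: "0 \<le> i1" using i1K by linarith
  have \<xi>K': "\<xi> \<in> zbox K'" using box_mono[OF M] unfolding K'_def by auto
  let ?g = "\<lambda>x. chi p \<xi> x * \<phi> x"
  have hat_eq: "hat p \<phi> \<xi> = hsum p K' ?g" by (rule hat_formula[OF p0 cyl \<xi>q M K'M])
  let ?R0 = "{x \<in> reps p K'. x j0 i1 = 0}"
  let ?u = "\<lambda>(x, d). zupd j0 i1 x d"
  have fin0: "finite ?R0" by (rule finite_subset[OF _ finite_reps]) auto
  have upd_in: "zupd j0 i1 x d \<in> reps p K'" if x: "x \<in> ?R0" and d: "d < p" for x d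
  proof -
    define z where "z = zupd j0 i1 x d"
      have xq: "\<forall>j. (\<forall>i. x j i < p) \<and> (\<exists>N. \<forall>i<N. x j i = 0)"
        and xz: "\<forall>j i. (i < - int K' \<or> int K' \<le> i) \<longrightarrow> x j i = 0"
        using x unfolding reps_def qpv_def padic_def by auto
      have zq: "z \<in> qpv p" unfolding qpv_def padic_def
      proof (intro CollectI allI conjI)
        fix j i
        show "z j i < p" using xq d unfolding z_def zupd_def by auto
      next
        fix j
        show "\<exists>N. \<forall>i<N. z j i = 0"
          by (rule exI[of _ "- int K'"]) (use xz i1K' i1pos in \<open>auto simp: z_def zupd_def\<close>)
      qed
      have "z \<in> reps p K'" unfolding reps_def
        using zq xz i1K' i1pos by (auto simp: z_def zupd_def)
      thus ?thesis unfolding z_def .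
  qed
  have bij: "bij_betw ?u (?R0 \<times> {..<p}) (reps p K')"
  proof (rule bij_betw_byWitness[where f'="\<lambda>x. (zupd j0 i1 x 0, x j0 i1)"])
    show "\<forall>a\<in>?R0 \<times> {..<p}. (\<lambda>x. (zupd j0 i1 x 0, x j0 i1)) (?u a) = a"
      by (auto simp: zupd_def fun_eq_iff)
    show "\<forall>a'\<in>reps p K'. ?u ((\<lambda>x. (zupd j0 i1 x 0, x j0 i1)) a') = a'"
      by (auto simp: zupd_def fun_eq_iff)
    show "?u ` (?R0 \<times> {..<p}) \<subseteq> reps p K'" using upd_in by auto
    show "(\<lambda>x. (zupd j0 i1 x 0, x j0 i1)) ` reps p K' \<subseteq> ?R0 \<times> {..<p}"
    proof
      fix z assume "z \<in> (\<lambda>x. (zupd j0 i1 x 0, x j0 i1)) ` reps p K'"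
      then obtain x where x: "x \<in> reps p K'" and z: "z = (zupd j0 i1 x 0, x j0 i1)" by auto
      have xq: "\<forall>j. (\<forall>i. x j i < p) \<and> (\<exists>N. \<forall>i<N. x j i = 0)"
        and xz: "\<forall>j i. (i < - int K' \<or> int K' \<le> i) \<longrightarrow> x j i = 0"
        using x unfolding reps_def qpv_def padic_def by auto
      have "zupd j0 i1 x 0 \<in> qpv p" unfolding qpv_def padic_def
      proof (intro CollectI allI conjI)
        fix j i
        show "zupd j0 i1 x 0 j i < p" using xq p0 unfolding zupd_def by auto
      next
        fix j
        show "\<exists>N. \<forall>i<N. zupd j0 i1 x 0 j i = 0"
          by (rule exI[of _ "- int K'"]) (use xz in \<open>auto simp: zupd_def\<close>)
      qed
      hence "zupd j0 i1 x 0 \<in> reps p K'" unfolding reps_def using xz by (auto simp: zupd_def)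
      moreover have "x j0 i1 < p" using xq by auto
      ultimately show "z \<in> ?R0 \<times> {..<p}" unfolding z by (auto simp: zupd_def)
    qed
  qed
  let ?w = "cis (2 * pi * real (\<xi> j0 m) / real p)"
  have fib: "?g (zupd j0 i1 x d) = ?g x * ?w ^ d" if x: "x \<in> ?R0" and dp: "d < p" for x d
  proof -
    have xr: "x \<in> reps p K'" and x0: "x j0 i1 = 0" using x by auto
    have xq: "x \<in> qpv p" using xr reps_qpv by auto
    have xz: "\<forall>j i. (i < - int K' \<or> int K' \<le> i) \<longrightarrow> x j i = 0" using xr unfolding reps_def by auto
    have xb: "x \<in> zbox K'" using xz unfolding zbox_def by auto
    have ub: "zupd j0 i1 x d \<in> zbox K'" using xb i1pos unfolding zbox_def zupd_def by auto
    have phi_eq: "\<phi> (zupd j0 i1 x d) = \<phi> x"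
    proof -
      have True: "d < p" by (rule dp)
      have uqp: "zupd j0 i1 x d \<in> qpv p" using upd_in[OF x dp] reps_qpv by auto
      have bb: "zupd j0 i1 x d \<in> zbox K \<longleftrightarrow> x \<in> zbox K"
        using i1pos unfolding zbox_def zupd_def by auto
      have tt: "ztrunc K (zupd j0 i1 x d) = ztrunc K x"
        using i1K unfolding ztrunc_def zupd_def by (auto simp: fun_eq_iff)
      show ?thesis using cyl uqp xq bb tt unfolding cyl_def by (metis (no_types, lifting))
    qed
    have chi_u: "chi p \<xi> (zupd j0 i1 x d) = cis (2 * pi * Sd p K' \<xi> (zupd j0 i1 x d))"
      by (rule chi_eq[OF p0 \<xi>K' ub]) simp
    have chi_x: "chi p \<xi> x = cis (2 * pi * Sd p K' \<xi> x)"
      by (rule chi_eq[OF p0 \<xi>K' xb]) simp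
    let ?T = "tval p (int K') (\<xi> j0)"
    have sd: "Sd p K' \<xi> (zupd j0 i1 x d) = Sd p K' \<xi> x + ?T * (real d * real p powr real_of_int i1)"
      by (rule Sd_upd[of x j0 i1 "- int K'" K' p \<xi> d]) (use x0 xz i1pos i1K' in auto)
    have mK': "m < int K'" using \<open>m \<le> i0\<close> i0 by linarith
    have low: "pint p (m + 1) (?T - real (\<xi> j0 m) * real p powr real_of_int m)"
      by (rule tval_lowest[OF p0 m(1) mlow mK'])
    have pt: "pint p i1 (real d * real p powr real_of_int i1)" by (rule pint_term[OF p0]) simp
    have E: "pint p 0 ((?T - real (\<xi> j0 m) * real p powr real_of_int m) * (real d * real p powr real_of_int i1))"
      using pint_mult[OF p0 low pt] unfolding i1_def by simp
    have pp: "real p powr real_of_int m * real p powr real_of_int i1 = 1 / real p"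
    proof -
      have "real p powr real_of_int m * real p powr real_of_int i1 = real p powr (real_of_int m + real_of_int i1)"
        by (simp add: powr_add)
      also have "real_of_int m + real_of_int i1 = - 1" unfolding i1_def by simp
      finally show ?thesis using p0 by (simp add: powr_neg_one)
    qed
    have split: "?T * (real d * real p powr real_of_int i1) = 2 * pi * real d * real (\<xi> j0 m) / real p / (2 * pi) +
       (?T - real (\<xi> j0 m) * real p powr real_of_int m) * (real d * real p powr real_of_int i1)"
    proof -
      have "real (\<xi> j0 m) * real p powr real_of_int m * (real d * real p powr real_of_int i1) =
            real d * real (\<xi> j0 m) * (real p powr real_of_int m * real p powr real_of_int i1)"
        by (simp add: algebra_simps)
      also have "\<dots> = real d * real (\<xi> j0 m) / real p" using pp by simp
      finally show ?thesis by (simp add: algebra_simps)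
    qed
    have "chi p \<xi> (zupd j0 i1 x d) = cis (2 * pi * ((Sd p K' \<xi> x + 2 * pi * real d * real (\<xi> j0 m) / real p / (2 * pi)) +
       (?T - real (\<xi> j0 m) * real p powr real_of_int m) * (real d * real p powr real_of_int i1)))"
      unfolding chi_u sd split by (simp add: add.assoc)
    also have "\<dots> = cis (2 * pi * (Sd p K' \<xi> x + 2 * pi * real d * real (\<xi> j0 m) / real p / (2 * pi)))"
      by (rule cis_pint[OF p0 E])
    also have "\<dots> = cis (2 * pi * Sd p K' \<xi> x + real d * (2 * pi * real (\<xi> j0 m) / real p))"
      by (simp add: algebra_simps)
    also have "\<dots> = chi p \<xi> x * ?w ^ d"
      unfolding chi_x Complex.DeMoivre cis_mult by simp
    finally show ?thesis using phi_eq by simp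
  qed
  have "(\<Sum>x\<in>reps p K'. ?g x) = (\<Sum>a\<in>?R0 \<times> {..<p}. ?g (?u a))"
    by (rule sum.reindex_bij_betw[OF bij, symmetric])
  also have "\<dots> = (\<Sum>x\<in>?R0. \<Sum>d\<in>{..<p}. ?g (zupd j0 i1 x d))"
    by (simp add: sum.cartesian_product case_prod_unfold)
  also have "\<dots> = (\<Sum>x\<in>?R0. ?g x * (\<Sum>d<p. ?w ^ d))"
    by (intro sum.cong refl) (simp add: fib sum_distrib_left)
  also have "(\<Sum>d<p. ?w ^ d) = 0"
  proof (rule root_sum_zero)
    show "0 < \<xi> j0 m" using m(1) by simp
    show "\<xi> j0 m < p" using \<xi>q unfolding qpv_def padic_def by auto
  qed
  finally have "(\<Sum>x\<in>reps p K'. ?g x) = 0" by simp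
  thus ?thesis unfolding hat_eq hsum_def by simp
qed

lemma hat_cyl:
  fixes \<phi> :: "('n::finite \<Rightarrow> padic) \<Rightarrow> complex"
  assumes "1 < p" "cyl p K \<phi>"
  shows "cyl p K (hat p \<phi>)"
  unfolding cyl_def
proof
  fix \<xi> :: "'n \<Rightarrow> padic" assume \<xi>: "\<xi> \<in> qpv p"
  show "hat p \<phi> \<xi> = (if \<xi> \<in> zbox K then hat p \<phi> (ztrunc K \<xi>) else 0)"
  proof (cases "\<xi> \<in> zbox K")
    case True thus ?thesis using hat_trunc[of p K \<phi> \<xi>] assms \<xi> by simp
  next
    case False thus ?thesis using hat_zero[OF assms \<xi> False] by simp
  qed
qed

lemma hsum_diff: "hsum p K (\<lambda>x. f x - g x) = hsum p K f - hsum p K g"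
  unfolding hsum_def by (simp add: sum_subtractf scaleR_diff_right)

lemma hat_diff:
  fixes \<phi> \<psi> :: "('n::finite \<Rightarrow> padic) \<Rightarrow> complex"
  assumes "0 < p" "cyl p K1 \<phi>" "cyl p K2 \<psi>"
  shows "hat p (\<phi> - \<psi>) \<xi> = hat p \<phi> \<xi> - hat p \<psi> \<xi>"
proof (cases "\<xi> \<in> qpv p")
  case False thus ?thesis unfolding hat_def by simp
next
  case True
  obtain M where M: "\<xi> \<in> zbox M" using qpv_box[OF True] by blast
  define K' where "K' = max (max K1 K2) M"
  have c1: "cyl p K' \<phi>" by (rule cyl_mono[OF assms(2)]) (auto simp: K'_def)
  have c2: "cyl p K' \<psi>" by (rule cyl_mono[OF assms(3)]) (auto simp: K'_def)
  have c3: "cyl p K' (\<phi> - \<psi>)" by (rule cyl_diff[OF c1 c2])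
  have le: "max K' M \<le> K'" by (simp add: K'_def)
  have "hat p (\<phi> - \<psi>) \<xi> = hsum p K' (\<lambda>x. chi p \<xi> x * (\<phi> - \<psi>) x)"
    by (rule hat_formula[OF assms(1) c3 True M le])
  also have "\<dots> = hsum p K' (\<lambda>x. chi p \<xi> x * \<phi> x - chi p \<xi> x * \<psi> x)"
    by (simp add: algebra_simps)
  also have "\<dots> = hat p \<phi> \<xi> - hat p \<psi> \<xi>"
    unfolding hsum_diff hat_formula[OF assms(1) c1 True M le] hat_formula[OF assms(1) c2 True M le] ..
  finally show ?thesis .
qed

definition goodw :: "nat \<Rightarrow> (('n::finite \<Rightarrow> padic) \<Rightarrow> real) \<Rightarrow> bool" where
  "goodw p w \<longleftrightarrow> (\<forall>K \<xi>. \<xi> \<in> qpv p \<longrightarrow> \<xi> \<in> zbox K \<longrightarrow> max 1 (w \<xi>) = max 1 (w (ztrunc K \<xi>)))"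

lemma integrand_cyl:
  fixes \<phi> :: "('n::finite \<Rightarrow> padic) \<Rightarrow> complex"
  assumes "goodw p w" "cyl p K (hat p \<phi>)"
  shows "cyl p K (\<lambda>\<xi>. (max 1 (w \<xi>)) ^ l * (cmod (hat p \<phi> \<xi>))\<^sup>2)"
  unfolding cyl_def
proof
  fix \<xi> :: "'n \<Rightarrow> padic" assume \<xi>: "\<xi> \<in> qpv p"
  show "(max 1 (w \<xi>)) ^ l * (cmod (hat p \<phi> \<xi>))\<^sup>2 = (if \<xi> \<in> zbox K then
     (max 1 (w (ztrunc K \<xi>))) ^ l * (cmod (hat p \<phi> (ztrunc K \<xi>)))\<^sup>2 else 0)"
  proof (cases "\<xi> \<in> zbox K")
    case True
    thus ?thesis using assms \<xi> unfolding goodw_def cyl_def by auto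
  next
    case False
    thus ?thesis using assms \<xi> unfolding cyl_def by auto
  qed
qed

lemma wnorm_formula:
  fixes \<phi> :: "('n::finite \<Rightarrow> padic) \<Rightarrow> complex"
  assumes "1 < p" "goodw p w" "cyl p K \<phi>"
  shows "wnorm p w l \<phi> = sqrt (hsum p K (\<lambda>\<xi>. (max 1 (w \<xi>)) ^ l * (cmod (hat p \<phi> \<xi>))\<^sup>2))"
  unfolding wnorm_def
  by (subst haar_cyl[OF _ integrand_cyl[OF assms(2) hat_cyl[OF assms(1,3)]]]) (use assms in auto)

lemma goodw_zero: "goodw p (\<lambda>_. 0)"
  unfolding goodw_def by simp

lemma max1_vnorm: "max 1 (vnorm p (x::'n::finite \<Rightarrow> padic)) = Max (range (\<lambda>j. max 1 (pnorm p (x j))))"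
proof (rule antisym)
  have "vnorm p x \<le> Max (range (\<lambda>j. max 1 (pnorm p (x j))))"
  proof (rule vnorm_le)
    fix j
    have "max 1 (pnorm p (x j)) \<le> Max (range (\<lambda>j. max 1 (pnorm p (x j))))" by (rule Max_ge) auto
    thus "pnorm p (x j) \<le> Max (range (\<lambda>j. max 1 (pnorm p (x j))))" by linarith
  qed
  moreover have "1 \<le> Max (range (\<lambda>j. max 1 (pnorm p (x j))))"
  proof -
    have "max 1 (pnorm p (x undefined)) \<le> Max (range (\<lambda>j. max 1 (pnorm p (x j))))" by (rule Max_ge) auto
    thus ?thesis by linarith
  qed
  ultimately show "max 1 (vnorm p x) \<le> Max (range (\<lambda>j. max 1 (pnorm p (x j))))" by simp
  show "Max (range (\<lambda>j. max 1 (pnorm p (x j)))) \<le> max 1 (vnorm p x)"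
  proof (subst Max_le_iff)
    show "finite (range (\<lambda>j. max 1 (pnorm p (x j))))" by simp
    show "range (\<lambda>j. max 1 (pnorm p (x j))) \<noteq> {}" by simp
    show "\<forall>a\<in>range (\<lambda>j. max 1 (pnorm p (x j))). a \<le> max 1 (vnorm p x)"
    proof (intro ballI)
      fix a assume "a \<in> range (\<lambda>j. max 1 (pnorm p (x j)))"
      then obtain j where "a = max 1 (pnorm p (x j))" by auto
      thus "a \<le> max 1 (vnorm p x)" using vnorm_ge[of p x j] by (auto simp: max_def)
    qed
  qed
qed

lemma max1_pnorm_trunc:
  assumes "padic p a" "1 \<le> p"
  shows "max 1 (pnorm p a) = max 1 (pnorm p (\<lambda>i. if i < int K then a i else 0))"
proof (cases "\<exists>i<int K. a i \<noteq> 0")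
  case True
  then obtain i where i: "i < int K" "a i \<noteq> 0" by auto
  obtain N where N: "\<forall>i<N. a i = 0" using assms unfolding padic_def by blast
  have "\<forall>j. a j \<noteq> 0 \<longrightarrow> N \<le> j" using N by (meson not_le)
  then obtain m where m: "a m \<noteq> 0" "\<forall>j. a j \<noteq> 0 \<longrightarrow> m \<le> j"
    using int_least_exists[of "\<lambda>j. a j \<noteq> 0" i N] i by blast
  have "m \<le> i" using m i by auto
  hence mK: "m < int K" using i by linarith
  have low: "\<forall>j<m. a j = 0" using m by (meson not_le)
  have "pnorm p a = real p powr (- real_of_int m)" by (rule pnorm_least[OF m(1) low])
  moreover have "pnorm p (\<lambda>i. if i < int K then a i else 0) = real p powr (- real_of_int m)"
    by (rule pnorm_least) (use m(1) low mK in auto)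
  ultimately show ?thesis by simp
next
  case False
  hence "pnorm p a \<le> real p powr (- real_of_int (int K))"
    by (intro pnorm_le assms(2)) auto
  also have "\<dots> \<le> real p powr 0" using assms by (intro powr_mono) auto
  also have "\<dots> = 1" using assms by simp
  finally have "pnorm p a \<le> 1" .
  moreover have "pnorm p (\<lambda>i. if i < int K then a i else 0) = 0"
    using False unfolding pnorm_def by auto
  ultimately show ?thesis by simp
qed

lemma max1_vnorm_trunc:
  assumes "\<xi> \<in> qpv p" "1 \<le> p"
  shows "max 1 (vnorm p (\<xi>::'n::finite \<Rightarrow> padic)) = max 1 (vnorm p (ztrunc K \<xi>))"
proof -
  have "\<And>j. max 1 (pnorm p (\<xi> j)) = max 1 (pnorm p (ztrunc K \<xi> j))"
    unfolding ztrunc_def using assms by (intro max1_pnorm_trunc) (auto simp: qpv_def)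
  thus ?thesis unfolding max1_vnorm by simp
qed

lemma goodw_vnorm: "1 \<le> p \<Longrightarrow> goodw p (vnorm p :: ('n::finite \<Rightarrow> padic) \<Rightarrow> real)"
  unfolding goodw_def using max1_vnorm_trunc by blast

lemma goodw_psi:
  fixes \<psi> :: "('n::finite \<Rightarrow> padic) \<Rightarrow> complex"
  assumes "1 \<le> p" "admissible p \<psi>"
  shows "goodw p (\<lambda>\<xi>. cmod (\<psi> \<xi>))"
  unfolding goodw_def
proof (intro allI impI)
  fix K and \<xi> :: "'n \<Rightarrow> padic" assume \<xi>: "\<xi> \<in> qpv p" "\<xi> \<in> zbox K"
  let ?S = "(\<lambda>\<xi>. cmod (\<psi> \<xi>)) ` {\<xi> \<in> qpv p. vnorm p \<xi> \<le> 1}"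
  have bdd: "bdd_above ?S" and sup: "Sup ?S \<le> 1" and rad: "radial p \<psi>"
    using assms(2) unfolding admissible_def Let_def by auto
  have small: "cmod (\<psi> \<eta>) \<le> 1" if "\<eta> \<in> qpv p" "vnorm p \<eta> \<le> 1" for \<eta>
  proof -
    have "cmod (\<psi> \<eta>) \<le> Sup ?S" by (rule cSup_upper[OF _ bdd]) (use that in auto)
    thus ?thesis using sup by simp
  qed
  have tq: "ztrunc K \<xi> \<in> qpv p" by (rule trunc_qpv[OF \<xi>(1)])
  have mv: "max 1 (vnorm p \<xi>) = max 1 (vnorm p (ztrunc K \<xi>))" by (rule max1_vnorm_trunc[OF \<xi>(1) assms(1)])
  show "max 1 (cmod (\<psi> \<xi>)) = max 1 (cmod (\<psi> (ztrunc K \<xi>)))"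
  proof (cases "vnorm p \<xi> \<le> 1")
    case True
    hence "vnorm p (ztrunc K \<xi>) \<le> 1" using mv by linarith
    thus ?thesis using small[OF \<xi>(1) True] small[OF tq] by simp
  next
    case False
    hence "vnorm p (ztrunc K \<xi>) = vnorm p \<xi>" using mv by linarith
    hence "\<psi> \<xi> = \<psi> (ztrunc K \<xi>)" using rad \<xi>(1) tq unfolding radial_def by metis
    thus ?thesis by simp
  qed
qed

lemma vsub_small:
  fixes x y :: "'n::finite \<Rightarrow> padic"
  assumes "\<And>j i. i < L \<Longrightarrow> y j i = x j i" "1 \<le> p"
  shows "vnorm p (vsub p y x) \<le> real p powr (- real_of_int L)"
proof (rule vnorm_le)
  fix j
  have "\<forall>i<L. vsub p y x j i = 0"
  proof (intro allI impI)
    fix i assume "i < L"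
    have "tval p (i + 1) (y j) = tval p (i + 1) (x j)"
      by (rule tval_cong) (use assms(1) \<open>i < L\<close> in auto)
    thus "vsub p y x j i = 0" unfolding vsub_def psub_def by simp
  qed
  thus "pnorm p (vsub p y x j) \<le> real p powr (- real_of_int L)" by (rule pnorm_le[OF _ assms(2)])
qed

lemma uniform_level:
  fixes \<phi> :: "('n::finite \<Rightarrow> padic) \<Rightarrow> complex"
  assumes p0: "0 < p"
    and loc: "\<And>x. x \<in> qpv p \<Longrightarrow> x \<in> zbox K0 \<Longrightarrow> \<exists>L::int. \<forall>y\<in>qpv p. (\<forall>j i. i < L \<longrightarrow> y j i = x j i) \<longrightarrow> \<phi> y = \<phi> x"
  shows "\<exists>L::int. \<forall>y\<in>qpv p \<inter> zbox K0. \<forall>z\<in>qpv p \<inter> zbox K0. (\<forall>j i. i < L \<longrightarrow> y j i = z j i) \<longrightarrow> \<phi> y = \<phi> z"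
proof -
  define B where "B = (qpv p \<inter> zbox K0 :: ('n \<Rightarrow> padic) set)"
  define D where "D = (\<lambda>i::int. if i < - int K0 then {0::nat} else {..<p})"
  define X where "X = product_topology (\<lambda>j::'n. product_topology (\<lambda>i. discrete_topology (D i)) UNIV) UNIV"
  have topX: "topspace X = B"
  proof -
    have "topspace X = {x. \<forall>j i. x j i \<in> D i}"
      unfolding X_def by (auto simp: PiE_UNIV_domain)
    also have "\<dots> = B"
    proof (intro set_eqI iffI)
      fix x :: "'n \<Rightarrow> padic" assume "x \<in> {x. \<forall>j i. x j i \<in> D i}"
      hence h: "\<And>j i. x j i \<in> D i" by auto
      have "\<And>j i. x j i < p" using h p0 unfolding D_def by (metis empty_iff insert_iff lessThan_iff)
      moreover have "\<And>j i. i < - int K0 \<Longrightarrow> x j i = 0" using h unfolding D_def by (metis insert_iff empty_iff)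
      ultimately show "x \<in> B" unfolding B_def qpv_def padic_def zbox_def by blast
    next
      fix x :: "'n \<Rightarrow> padic" assume "x \<in> B"
      thus "x \<in> {x. \<forall>j i. x j i \<in> D i}" unfolding B_def qpv_def padic_def zbox_def D_def by auto
    qed
    finally show ?thesis .
  qed
  have comp: "compact_space X"
    unfolding X_def by (simp add: compact_space_product_topology D_def compact_space_discrete_topology)
  have ex: "\<forall>x\<in>B. \<exists>L::int. \<forall>y\<in>qpv p. (\<forall>j i. i < L \<longrightarrow> y j i = x j i) \<longrightarrow> \<phi> y = \<phi> x"
    using loc unfolding B_def by blast
  obtain Lf where Lf': "\<forall>x\<in>B. \<forall>y\<in>qpv p. (\<forall>j i. i < Lf x \<longrightarrow> y j i = x j i) \<longrightarrow> \<phi> y = \<phi> x"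
    using bchoice[OF ex] by blast
  have Lf: "\<And>x. x \<in> B \<Longrightarrow> \<forall>y\<in>qpv p. (\<forall>j i. i < Lf x \<longrightarrow> y j i = x j i) \<longrightarrow> \<phi> y = \<phi> x"
    using Lf' by blast
  define U where "U = (\<lambda>x::'n \<Rightarrow> padic. PiE UNIV (\<lambda>j. PiE UNIV (\<lambda>i. if - int K0 \<le> i \<and> i < Lf x then {x j i} else D i)))"
  have Uopen: "openin X (U x)" if x: "x \<in> B" for x
  proof -
    have xD: "\<And>j i. x j i \<in> D i" using x topX unfolding X_def by (auto simp: PiE_UNIV_domain)
    have inner: "openin (product_topology (\<lambda>i. discrete_topology (D i)) UNIV)
        (PiE UNIV (\<lambda>i. if - int K0 \<le> i \<and> i < Lf x then {x j i} else D i))" for j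
    proof (subst openin_PiE_gen, rule disjI2, intro conjI ballI)
      show "finite {i \<in> UNIV. (if - int K0 \<le> i \<and> i < Lf x then {x j i} else D i) \<noteq> topspace (discrete_topology (D i))}"
        by (rule finite_subset[of _ "{- int K0..<Lf x}"]) auto
      fix i
      show "openin (discrete_topology (D i)) (if - int K0 \<le> i \<and> i < Lf x then {x j i} else D i)"
        using xD[of j i] by auto
    qed
    show ?thesis unfolding U_def X_def
      by (subst openin_PiE_gen, rule disjI2, intro conjI ballI) (auto intro: inner)
  qed
  have Ucov: "x \<in> U x" if "x \<in> B" for x
  proof -
    have xD: "\<And>j i. x j i \<in> D i" using that topX unfolding X_def by (auto simp: PiE_UNIV_domain)
    show ?thesis unfolding U_def using xD by (auto simp: PiE_UNIV_domain)
  qed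
  have "compactin X B" using comp topX unfolding compact_space_def by simp
  then obtain F where F: "finite F" "F \<subseteq> U ` B" "B \<subseteq> \<Union>F"
    unfolding compactin_def using Uopen Ucov
    by (smt (verit, ccfv_threshold) UN_I imageE image_iff subsetI)
  then obtain C where C: "C \<subseteq> B" "finite C" "F = U ` C" using finite_subset_image by metis
  define L where "L = Max (insert 0 (Lf ` C))"
  have LC: "Lf c \<le> L" if "c \<in> C" for c unfolding L_def using C that by (intro Max_ge) auto
  show ?thesis
  proof (intro exI[of _ L] ballI impI)
    fix y z :: "'n \<Rightarrow> padic" assume y: "y \<in> qpv p \<inter> zbox K0" and z: "z \<in> qpv p \<inter> zbox K0"
      and yz: "\<forall>j i. i < L \<longrightarrow> y j i = z j i"
    have "y \<in> B" using y unfolding B_def .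
    then obtain c where c: "c \<in> C" "y \<in> U c" using F C by auto
    have cB: "c \<in> B" using c C by auto
    have agree: "\<And>w. w \<in> B \<Longrightarrow> (\<forall>j i. - int K0 \<le> i \<and> i < Lf c \<longrightarrow> w j i = c j i) \<Longrightarrow> \<phi> w = \<phi> c"
    proof -
      fix w assume w: "w \<in> B" and h: "\<forall>j i. - int K0 \<le> i \<and> i < Lf c \<longrightarrow> w j i = c j i"
      have "\<forall>j i. i < Lf c \<longrightarrow> w j i = c j i"
      proof (intro allI impI)
        fix j i assume "i < Lf c"
        show "w j i = c j i"
        proof (cases "- int K0 \<le> i")
          case True thus ?thesis using h \<open>i < Lf c\<close> by auto
        next
          case False thus ?thesis using w cB unfolding B_def zbox_def by auto
        qed
      qed
      thus "\<phi> w = \<phi> c" using Lf[OF cB] w unfolding B_def by auto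
    qed
    have yc: "\<forall>j i. - int K0 \<le> i \<and> i < Lf c \<longrightarrow> y j i = c j i"
    proof (intro allI impI)
      fix j i assume h: "- int K0 \<le> i \<and> i < Lf c"
      have "y j i \<in> (if - int K0 \<le> i \<and> i < Lf c then {c j i} else D i)"
        using c(2) unfolding U_def PiE_UNIV_domain Pi_iff by blast
      thus "y j i = c j i" using h by simp
    qed
    have zc: "\<forall>j i. - int K0 \<le> i \<and> i < Lf c \<longrightarrow> z j i = c j i"
      using yc yz LC[OF c(1)] by (metis order_less_le_trans)
    have "z \<in> B" using z unfolding B_def .
    show "\<phi> y = \<phi> z" using agree[OF \<open>y \<in> B\<close> yc] agree[OF \<open>z \<in> B\<close> zc] by simp
  qed
qed

lemma dfun_cyl:
  fixes \<phi> :: "('n::finite \<Rightarrow> padic) \<Rightarrow> complex"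
  assumes p1: "1 < p" and d: "dfun p \<phi>"
  shows "\<exists>K. cyl p K \<phi>"
proof -
  have p0: "0 < p" and rp1: "1 < real p" and rp: "1 \<le> p" using p1 by auto
  have loc0: "\<forall>x\<in>qpv p. \<exists>e>0. \<forall>y\<in>qpv p. vnorm p (vsub p y x) < e \<longrightarrow> \<phi> y = \<phi> x"
    and "\<exists>R. \<forall>x\<in>qpv p. R < vnorm p x \<longrightarrow> \<phi> x = 0" using d unfolding dfun_def by auto
  then obtain R where R: "\<forall>x\<in>qpv p. R < vnorm p x \<longrightarrow> \<phi> x = 0" by blast
  obtain K0 where K0: "R < real p ^ K0" using real_arch_pow[OF rp1] by blast
  have outside: "\<phi> x = 0" if x: "x \<in> qpv p" "x \<notin> zbox K0" for x
  proof -
    obtain j i where ji: "i < - int K0" "x j i \<noteq> 0" using x(2) unfolding zbox_def by auto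
    have "padic p (x j)" using x(1) unfolding qpv_def by auto
    hence "real p powr (- real_of_int i) \<le> pnorm p (x j)" using pnorm_ge ji rp by blast
    moreover have "real p powr (real K0) \<le> real p powr (- real_of_int i)"
      using ji rp by (intro powr_mono) auto
    moreover have "real p powr (real K0) = real p ^ K0" using p0 by (simp add: powr_realpow)
    ultimately have "R < vnorm p x" using K0 vnorm_ge[of p x j] by linarith
    thus ?thesis using R x by auto
  qed
  have loc: "\<exists>L::int. \<forall>y\<in>qpv p. (\<forall>j i. i < L \<longrightarrow> y j i = x j i) \<longrightarrow> \<phi> y = \<phi> x"
    if x: "x \<in> qpv p" "x \<in> zbox K0" for x
  proof -
    obtain e where e: "e > 0" "\<forall>y\<in>qpv p. vnorm p (vsub p y x) < e \<longrightarrow> \<phi> y = \<phi> x"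
      using loc0 x by blast
    have "1 / real p < 1" using rp1 by simp
    then obtain n where n: "(1 / real p) ^ n < e" using real_arch_pow_inv[OF e(1)] by blast
    have pn: "real p powr (- real_of_int (int n)) = (1 / real p) ^ n"
      using p0 by (simp add: powr_minus powr_realpow power_one_over inverse_eq_divide)
    show ?thesis
    proof (intro exI[of _ "int n"] ballI impI)
      fix y assume y: "y \<in> qpv p" and a: "\<forall>j i. i < int n \<longrightarrow> y j i = x j i"
      have "vnorm p (vsub p y x) \<le> real p powr (- real_of_int (int n))"
        by (rule vsub_small) (use a rp in auto)
      thus "\<phi> y = \<phi> x" using e(2) y n pn by auto
    qed
  qed
  obtain L where L: "\<forall>y\<in>qpv p \<inter> zbox K0. \<forall>z\<in>qpv p \<inter> zbox K0. (\<forall>j i. i < L \<longrightarrow> y j i = z j i) \<longrightarrow> \<phi> y = \<phi> z"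
    using uniform_level[OF p0, of K0 \<phi>] loc by blast
  define K where "K = max K0 (nat L)"
  have "cyl p K \<phi>" unfolding cyl_def
  proof
    fix x :: "'n \<Rightarrow> padic" assume x: "x \<in> qpv p"
    have tq: "ztrunc K x \<in> qpv p" by (rule trunc_qpv[OF x])
    show "\<phi> x = (if x \<in> zbox K then \<phi> (ztrunc K x) else 0)"
    proof (cases "x \<in> zbox K0")
      case True
      have xK: "x \<in> zbox K" using box_mono[OF True] unfolding K_def by auto
      have tb: "ztrunc K x \<in> zbox K0" by (rule trunc_box[OF True])
      have "\<forall>j i. i < L \<longrightarrow> ztrunc K x j i = x j i" unfolding ztrunc_def K_def by auto
      hence "\<phi> (ztrunc K x) = \<phi> x" using L tq tb x True by blast
      thus ?thesis using xK by simp
    next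
      case False
      have "\<phi> x = 0" by (rule outside[OF x False])
      moreover have "\<phi> (ztrunc K x) = 0"
        by (rule outside[OF tq]) (use False trunc_box_iff in blast)
      ultimately show ?thesis by simp
    qed
  qed
  thus ?thesis by blast
qed

definition iscyl :: "nat \<Rightarrow> (('n::finite \<Rightarrow> padic) \<Rightarrow> complex) \<Rightarrow> bool" where
  "iscyl p f \<longleftrightarrow> (\<exists>K. cyl p K f)"

lemma common2:
  assumes "iscyl p f" "iscyl p g"
  shows "\<exists>K. cyl p K f \<and> cyl p K g"
proof -
  obtain K1 K2 where "cyl p K1 f" "cyl p K2 g" using assms unfolding iscyl_def by blast
  thus ?thesis by (intro exI[of _ "max K1 K2"]) (auto intro: cyl_mono)
qed

lemma common3:
  assumes "iscyl p f" "iscyl p g" "iscyl p h"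
  shows "\<exists>K. cyl p K f \<and> cyl p K g \<and> cyl p K h"
proof -
  obtain K1 K2 K3 where "cyl p K1 f" "cyl p K2 g" "cyl p K3 h" using assms unfolding iscyl_def by blast
  thus ?thesis by (intro exI[of _ "max (max K1 K2) K3"]) (auto intro: cyl_mono)
qed

lemma iscyl_diff: "iscyl p f \<Longrightarrow> iscyl p g \<Longrightarrow> iscyl p (f - g)"
  using common2 cyl_diff unfolding iscyl_def by metis

lemma iscyl_zero: "iscyl p ((\<lambda>_. 0) :: ('n::finite \<Rightarrow> padic) \<Rightarrow> complex)"
  unfolding iscyl_def cyl_def by auto

lemma dfun_iscyl: "1 < p \<Longrightarrow> dfun p f \<Longrightarrow> iscyl p f"
  unfolding iscyl_def by (rule dfun_cyl)

definition Fw :: "nat \<Rightarrow> (('n::finite \<Rightarrow> padic) \<Rightarrow> real) \<Rightarrow> nat \<Rightarrow> (('n \<Rightarrow> padic) \<Rightarrow> complex) \<Rightarrow> ('n \<Rightarrow> padic) \<Rightarrow> real" where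
  "Fw p w l f \<xi> = sqrt ((max 1 (w \<xi>)) ^ l) * cmod (hat p f \<xi>)"

definition cK :: "nat \<Rightarrow> nat \<Rightarrow> 'n::finite itself \<Rightarrow> real" where
  "cK p K _ = real p powr (- (real K * real CARD('n)))"

lemma Fw_nonneg: "0 \<le> Fw p w l f \<xi>"
  unfolding Fw_def by simp

lemma Fw_sq: "(Fw p w l f \<xi>)\<^sup>2 = (max 1 (w \<xi>)) ^ l * (cmod (hat p f \<xi>))\<^sup>2"
  unfolding Fw_def by (simp add: power_mult_distrib)

lemma wnorm_L2:
  fixes f :: "('n::finite \<Rightarrow> padic) \<Rightarrow> complex"
  assumes "1 < p" "goodw p w" "cyl p K f"
  shows "wnorm p w l f = sqrt (cK p K TYPE('n)) * L2_set (Fw p w l f) (reps p K)"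
proof -
  have "wnorm p w l f = sqrt (hsum p K (\<lambda>\<xi>. (max 1 (w \<xi>)) ^ l * (cmod (hat p f \<xi>))\<^sup>2))"
    by (rule wnorm_formula[OF assms])
  also have "hsum p K (\<lambda>\<xi>. (max 1 (w \<xi>)) ^ l * (cmod (hat p f \<xi>))\<^sup>2) =
      cK p K TYPE('n) * (\<Sum>\<xi>\<in>reps p K. (Fw p w l f \<xi>)\<^sup>2)"
    unfolding hsum_def cK_def Fw_sq by simp
  finally show ?thesis unfolding L2_set_def by (simp add: real_sqrt_mult)
qed

lemma cK_nonneg: "0 \<le> cK p K TYPE('n::finite)"
  unfolding cK_def by simp

lemma wnorm_nonneg:
  fixes f :: "('n::finite \<Rightarrow> padic) \<Rightarrow> complex"
  assumes "1 < p" "goodw p w" "iscyl p f"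
  shows "0 \<le> wnorm p w l f"
proof -
  obtain K where K: "cyl p K f" using assms unfolding iscyl_def by blast
  have "0 \<le> cK p K TYPE('n)" by (rule cK_nonneg)
  thus ?thesis unfolding wnorm_L2[OF assms(1,2) K] using L2_set_nonneg by simp
qed

lemma wnorm_tri:
  fixes a b c :: "('n::finite \<Rightarrow> padic) \<Rightarrow> complex"
  assumes p1: "1 < p" and g: "goodw p w" and "iscyl p a" "iscyl p b" "iscyl p c"
  shows "wnorm p w l (a - c) \<le> wnorm p w l (a - b) + wnorm p w l (b - c)"
proof -
  have p0: "0 < p" using p1 by auto
  obtain K where K: "cyl p K a" "cyl p K b" "cyl p K c" using common3 assms by blast
  have pt: "Fw p w l (a - c) \<xi> \<le> Fw p w l (a - b) \<xi> + Fw p w l (b - c) \<xi>" for \<xi>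
  proof -
    have "cmod (hat p (a - c) \<xi>) \<le> cmod (hat p (a - b) \<xi>) + cmod (hat p (b - c) \<xi>)"
      unfolding hat_diff[OF p0 K(1) K(3)] hat_diff[OF p0 K(1) K(2)] hat_diff[OF p0 K(2) K(3)]
      using norm_triangle_ineq[of "hat p a \<xi> - hat p b \<xi>" "hat p b \<xi> - hat p c \<xi>"] by simp
    thus ?thesis unfolding Fw_def by (simp add: distrib_left[symmetric] mult_left_mono)
  qed
  have "L2_set (Fw p w l (a - c)) (reps p K) \<le> L2_set (\<lambda>\<xi>. Fw p w l (a - b) \<xi> + Fw p w l (b - c) \<xi>) (reps p K)"
    by (rule L2_set_mono) (use pt Fw_nonneg in auto)
  also have "\<dots> \<le> L2_set (Fw p w l (a - b)) (reps p K) + L2_set (Fw p w l (b - c)) (reps p K)"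
    by (rule L2_set_triangle_ineq)
  finally have "sqrt (cK p K TYPE('n)) * L2_set (Fw p w l (a - c)) (reps p K) \<le>
     sqrt (cK p K TYPE('n)) * (L2_set (Fw p w l (a - b)) (reps p K) + L2_set (Fw p w l (b - c)) (reps p K))"
    by (rule mult_left_mono) (simp add: cK_nonneg)
  thus ?thesis
    unfolding wnorm_L2[OF p1 g cyl_diff[OF K(1) K(3)]] wnorm_L2[OF p1 g cyl_diff[OF K(1) K(2)]]
      wnorm_L2[OF p1 g cyl_diff[OF K(2) K(3)]] by (simp add: distrib_left)
qed

lemma wnorm_swap:
  fixes a b :: "('n::finite \<Rightarrow> padic) \<Rightarrow> complex"
  assumes "1 < p" "iscyl p a" "iscyl p b"
  shows "wnorm p w l (a - b) = wnorm p w l (b - a)"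
proof -
  obtain K where K: "cyl p K a" "cyl p K b" using common2 assms(2,3) by blast
  have "\<And>\<xi>. cmod (hat p (a - b) \<xi>) = cmod (hat p (b - a) \<xi>)"
    using hat_diff[of p K a K b] hat_diff[of p K b K a] K assms(1) by (simp add: norm_minus_commute)
  thus ?thesis unfolding wnorm_def by simp
qed

lemma wnorm_mono_weight:
  fixes f :: "('n::finite \<Rightarrow> padic) \<Rightarrow> complex"
  assumes p1: "1 < p" and g1: "goodw p w1" and g2: "goodw p w2" and f: "iscyl p f" and C: "0 \<le> C"
    and le: "\<And>\<xi>. \<xi> \<in> qpv p \<Longrightarrow> (max 1 (w1 \<xi>)) ^ l1 \<le> C * (max 1 (w2 \<xi>)) ^ l2"
  shows "wnorm p w1 l1 f \<le> sqrt C * wnorm p w2 l2 f"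
proof -
  obtain K where K: "cyl p K f" using f unfolding iscyl_def by blast
  have "hsum p K (\<lambda>\<xi>. (max 1 (w1 \<xi>)) ^ l1 * (cmod (hat p f \<xi>))\<^sup>2) \<le>
        C * hsum p K (\<lambda>\<xi>. (max 1 (w2 \<xi>)) ^ l2 * (cmod (hat p f \<xi>))\<^sup>2)"
  proof -
    have "(\<Sum>\<xi>\<in>reps p K. (max 1 (w1 \<xi>)) ^ l1 * (cmod (hat p f \<xi>))\<^sup>2) \<le>
          (\<Sum>\<xi>\<in>reps p K. C * ((max 1 (w2 \<xi>)) ^ l2 * (cmod (hat p f \<xi>))\<^sup>2))"
    proof (rule sum_mono)
      fix \<xi> :: "'n \<Rightarrow> padic" assume "\<xi> \<in> reps p K"
      hence "\<xi> \<in> qpv p" using reps_qpv by auto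
      thus "(max 1 (w1 \<xi>)) ^ l1 * (cmod (hat p f \<xi>))\<^sup>2 \<le> C * ((max 1 (w2 \<xi>)) ^ l2 * (cmod (hat p f \<xi>))\<^sup>2)"
        using le mult_right_mono[OF le[of \<xi>], of "(cmod (hat p f \<xi>))\<^sup>2"] by (simp add: mult.assoc)
    qed
    hence S: "(\<Sum>\<xi>\<in>reps p K. (max 1 (w1 \<xi>)) ^ l1 * (cmod (hat p f \<xi>))\<^sup>2) \<le>
          C * (\<Sum>\<xi>\<in>reps p K. (max 1 (w2 \<xi>)) ^ l2 * (cmod (hat p f \<xi>))\<^sup>2)"
      by (simp add: sum_distrib_left)
    have "real p powr (- (real K * real CARD('n))) * (\<Sum>\<xi>\<in>reps p K. (max 1 (w1 \<xi>)) ^ l1 * (cmod (hat p f \<xi>))\<^sup>2) \<le>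
      real p powr (- (real K * real CARD('n))) * (C * (\<Sum>\<xi>\<in>reps p K. (max 1 (w2 \<xi>)) ^ l2 * (cmod (hat p f \<xi>))\<^sup>2))"
      by (rule mult_left_mono[OF S]) simp
    thus ?thesis unfolding hsum_def by (simp add: mult.left_commute)
  qed
  hence "sqrt (hsum p K (\<lambda>\<xi>. (max 1 (w1 \<xi>)) ^ l1 * (cmod (hat p f \<xi>))\<^sup>2)) \<le>
        sqrt C * sqrt (hsum p K (\<lambda>\<xi>. (max 1 (w2 \<xi>)) ^ l2 * (cmod (hat p f \<xi>))\<^sup>2))"
    by (simp add: real_sqrt_mult[symmetric])
  thus ?thesis unfolding wnorm_formula[OF p1 g1 K] wnorm_formula[OF p1 g2 K] .
qed

lemma L2_le_wnorm:
  fixes f :: "('n::finite \<Rightarrow> padic) \<Rightarrow> complex"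
  assumes "1 < p" "goodw p w" "iscyl p f"
  shows "wnorm p (\<lambda>_. 0) 0 f \<le> wnorm p w l f"
  using wnorm_mono_weight[OF assms(1) goodw_zero assms(2,3), of 1 0 l] by simp

lemma sqrt_dist:
  fixes c :: real
  assumes "0 \<le> c"
  shows "c * (a * b + d * e) = (sqrt c * a) * (sqrt c * b) + (sqrt c * d) * (sqrt c * e)"
proof -
  have sc2: "\<And>x. sqrt c * (sqrt c * x) = c * x" using assms by (simp add: mult.assoc[symmetric])
  show ?thesis using assms by (simp add: algebra_simps sc2)
qed

lemma key_ineq:
  fixes u v :: "('n::finite \<Rightarrow> padic) \<Rightarrow> complex"
  assumes p1: "1 < p" and g: "goodw p w" and "iscyl p u" "iscyl p v"
  shows "(wnorm p w l u)\<^sup>2 \<le> wnorm p w l u * wnorm p w l (u - v) + wnorm p w (2 * l) u * wnorm p (\<lambda>_. 0) 0 v"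
proof -
  have p0: "0 < p" using p1 by auto
  obtain K where K: "cyl p K u" "cyl p K v" using common2 assms(3,4) by blast
  define A where "A = (reps p K :: ('n \<Rightarrow> padic) set)"
  define c where "c = cK p K TYPE('n)"
  define W where "W = (\<lambda>\<xi>. (max 1 (w \<xi>)) ^ l)"
  have W0: "0 \<le> W \<xi>" for \<xi> unfolding W_def by simp
  define hu where "hu = (\<lambda>\<xi>. cmod (hat p u \<xi>))"
  define hv where "hv = (\<lambda>\<xi>. cmod (hat p v \<xi>))"
  have Fu: "Fw p w l u \<xi> = sqrt (W \<xi>) * hu \<xi>" for \<xi> unfolding Fw_def W_def hu_def ..
  have F2u: "Fw p w (2 * l) u \<xi> = W \<xi> * hu \<xi>" for \<xi>
  proof -
    have "sqrt ((max 1 (w \<xi>)) ^ (2 * l)) = sqrt ((W \<xi>)\<^sup>2)"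
      unfolding W_def by (simp add: power_mult[symmetric] mult.commute)
    also have "\<dots> = W \<xi>" using W0 by simp
    finally show ?thesis unfolding Fw_def hu_def by simp
  qed
  have F0v: "Fw p (\<lambda>_. 0) 0 v \<xi> = hv \<xi>" for \<xi> unfolding Fw_def hv_def by simp
  have pt: "(Fw p w l u \<xi>)\<^sup>2 \<le> Fw p w l u \<xi> * Fw p w l (u - v) \<xi> + Fw p w (2 * l) u \<xi> * Fw p (\<lambda>_. 0) 0 v \<xi>" for \<xi>
  proof -
    have tri: "hu \<xi> \<le> cmod (hat p (u - v) \<xi>) + hv \<xi>"
      unfolding hu_def hv_def hat_diff[OF p0 K]
      using norm_triangle_ineq[of "hat p u \<xi> - hat p v \<xi>" "hat p v \<xi>"] by simp
    have "(Fw p w l u \<xi>)\<^sup>2 = W \<xi> * hu \<xi> * hu \<xi>"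
      unfolding Fu using W0 by (simp add: power2_eq_square real_sqrt_mult[symmetric] algebra_simps)
    also have "\<dots> \<le> W \<xi> * hu \<xi> * (cmod (hat p (u - v) \<xi>) + hv \<xi>)"
      by (rule mult_left_mono[OF tri]) (simp add: W0 hu_def)
    also have "\<dots> = Fw p w l u \<xi> * Fw p w l (u - v) \<xi> + Fw p w (2 * l) u \<xi> * Fw p (\<lambda>_. 0) 0 v \<xi>"
    proof -
      have Fd: "Fw p w l (u - v) \<xi> = sqrt (W \<xi>) * cmod (hat p (u - v) \<xi>)" unfolding Fw_def W_def ..
      have sw: "sqrt (W \<xi>) * sqrt (W \<xi>) = W \<xi>" using W0[of \<xi>] by simp
      have "(sqrt (W \<xi>) * hu \<xi>) * (sqrt (W \<xi>) * cmod (hat p (u - v) \<xi>)) =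
            (sqrt (W \<xi>) * sqrt (W \<xi>)) * (hu \<xi> * cmod (hat p (u - v) \<xi>))" by (simp only: mult_ac)
      also have "\<dots> = W \<xi> * (hu \<xi> * cmod (hat p (u - v) \<xi>))" by (simp only: sw)
      finally have e: "(sqrt (W \<xi>) * hu \<xi>) * (sqrt (W \<xi>) * cmod (hat p (u - v) \<xi>)) =
            W \<xi> * (hu \<xi> * cmod (hat p (u - v) \<xi>))" .
      show ?thesis unfolding Fu Fd F2u F0v e by (simp add: algebra_simps)
    qed
    finally show ?thesis .
  qed
  have S1: "(\<Sum>\<xi>\<in>A. (Fw p w l u \<xi>)\<^sup>2) \<le> (\<Sum>\<xi>\<in>A. Fw p w l u \<xi> * Fw p w l (u - v) \<xi>) +
          (\<Sum>\<xi>\<in>A. Fw p w (2 * l) u \<xi> * Fw p (\<lambda>_. 0) 0 v \<xi>)"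
    unfolding sum.distrib[symmetric] by (rule sum_mono) (rule pt)
  have ab: "\<And>p w l f \<xi>. \<bar>Fw p w l f \<xi>\<bar> = Fw p w l f \<xi>" by (simp add: Fw_nonneg)
  have S2: "(\<Sum>\<xi>\<in>A. Fw p w l u \<xi> * Fw p w l (u - v) \<xi>) \<le> L2_set (Fw p w l u) A * L2_set (Fw p w l (u - v)) A"
    using L2_set_mult_ineq[of "Fw p w l u" "Fw p w l (u - v)" A] unfolding ab .
  have S3: "(\<Sum>\<xi>\<in>A. Fw p w (2 * l) u \<xi> * Fw p (\<lambda>_. 0) 0 v \<xi>) \<le> L2_set (Fw p w (2 * l) u) A * L2_set (Fw p (\<lambda>_. 0) 0 v) A"
    using L2_set_mult_ineq[of "Fw p w (2 * l) u" "Fw p (\<lambda>_. 0) 0 v" A] unfolding ab .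
  have S: "(\<Sum>\<xi>\<in>A. (Fw p w l u \<xi>)\<^sup>2) \<le> L2_set (Fw p w l u) A * L2_set (Fw p w l (u - v)) A +
      L2_set (Fw p w (2 * l) u) A * L2_set (Fw p (\<lambda>_. 0) 0 v) A" using S1 S2 S3 by linarith
  have c0: "0 \<le> c" unfolding c_def by (rule cK_nonneg)
  have lhs: "(wnorm p w l u)\<^sup>2 = c * (\<Sum>\<xi>\<in>A. (Fw p w l u \<xi>)\<^sup>2)"
    unfolding wnorm_L2[OF p1 g K(1)] A_def[symmetric] c_def[symmetric] L2_set_def
    using c0 by (simp add: power_mult_distrib sum_nonneg)
  have "c * (\<Sum>\<xi>\<in>A. (Fw p w l u \<xi>)\<^sup>2) \<le> c * (L2_set (Fw p w l u) A * L2_set (Fw p w l (u - v)) A +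
      L2_set (Fw p w (2 * l) u) A * L2_set (Fw p (\<lambda>_. 0) 0 v) A)"
    by (rule mult_left_mono[OF S c0])
  also have "\<dots> = (sqrt c * L2_set (Fw p w l u) A) * (sqrt c * L2_set (Fw p w l (u - v)) A) +
      (sqrt c * L2_set (Fw p w (2 * l) u) A) * (sqrt c * L2_set (Fw p (\<lambda>_. 0) 0 v) A)"
    by (rule sqrt_dist[OF c0])
  also have "\<dots> = wnorm p w l u * wnorm p w l (u - v) + wnorm p w (2 * l) u * wnorm p (\<lambda>_. 0) 0 v"
    unfolding wnorm_L2[OF p1 g K(1)] wnorm_L2[OF p1 g cyl_diff[OF K]] wnorm_L2[OF p1 g K(1)]
      wnorm_L2[OF p1 goodw_zero K(2)] A_def c_def ..
  finally show ?thesis using lhs by simp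
qed

lemma fun_diff_zero: "f - (\<lambda>_. 0) = (f :: 'a \<Rightarrow> complex)"
  by (simp add: fun_diff_def)

lemma fun_zero_diff: "(\<lambda>_. 0) - (f - g) = (g - f :: 'a \<Rightarrow> complex)"
  by (simp add: fun_diff_def)

lemma wnorm_T2:
  fixes a c :: "('n::finite \<Rightarrow> padic) \<Rightarrow> complex"
  assumes p1: "1 < p" and g: "goodw p w" and a: "iscyl p a" and c: "iscyl p c"
  shows "wnorm p w l (a - c) \<le> wnorm p w l a + wnorm p w l c"
proof -
  have "wnorm p w l (a - c) \<le> wnorm p w l (a - (\<lambda>_. 0)) + wnorm p w l ((\<lambda>_. 0) - c)"
    by (rule wnorm_tri[OF p1 g a iscyl_zero c])
  also have "wnorm p w l ((\<lambda>_. 0) - c) = wnorm p w l (c - (\<lambda>_. 0))"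
    by (rule wnorm_swap[OF p1 iscyl_zero c])
  finally show ?thesis unfolding fun_diff_zero .
qed

lemma wnorm_T4:
  fixes a b c d :: "('n::finite \<Rightarrow> padic) \<Rightarrow> complex"
  assumes p1: "1 < p" and g: "goodw p w" and "iscyl p a" "iscyl p b" "iscyl p c" "iscyl p d"
  shows "wnorm p w l ((a - b) - (c - d)) \<le> wnorm p w l (a - c) + wnorm p w l (b - d)"
proof -
  have "(a - b) - (c - d) = (a - c) - (b - d)" by (simp add: fun_diff_def algebra_simps)
  thus ?thesis using wnorm_T2[OF p1 g iscyl_diff[OF assms(3,5)] iscyl_diff[OF assms(4,6)]] by simp
qed

lemma wnorm_absdiff:
  fixes a c :: "('n::finite \<Rightarrow> padic) \<Rightarrow> complex"
  assumes p1: "1 < p" and g: "goodw p w" and a: "iscyl p a" and c: "iscyl p c"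
  shows "\<bar>wnorm p w l a - wnorm p w l c\<bar> \<le> wnorm p w l (a - c)"
proof -
  have 1: "wnorm p w l a \<le> wnorm p w l (a - c) + wnorm p w l c"
    using wnorm_tri[OF p1 g a c iscyl_zero] unfolding fun_diff_zero .
  have "wnorm p w l c \<le> wnorm p w l (c - a) + wnorm p w l a"
    using wnorm_tri[OF p1 g c a iscyl_zero] unfolding fun_diff_zero .
  hence 2: "wnorm p w l c \<le> wnorm p w l (a - c) + wnorm p w l a"
    using wnorm_swap[OF p1 a c] by simp
  show ?thesis using 1 2 by linarith
qed

lemma null_lemma:
  fixes u :: "nat \<Rightarrow> ('n::finite \<Rightarrow> padic) \<Rightarrow> complex"
  assumes p1: "1 < p" and g: "goodw p w" and cu: "\<And>k. iscyl p (u k)"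
    and cau: "\<And>e. e > 0 \<Longrightarrow> \<exists>N. \<forall>m\<ge>N. \<forall>k\<ge>N. wnorm p w l (u m - u k) < e"
    and null: "(\<lambda>k. wnorm p (\<lambda>_. 0) 0 (u k)) \<longlonglongrightarrow> 0"
  shows "(\<lambda>k. wnorm p w l (u k)) \<longlonglongrightarrow> 0"
proof (rule LIMSEQ_I)
  fix \<epsilon> :: real assume \<epsilon>: "0 < \<epsilon>"
  obtain N1 where N1: "\<forall>m\<ge>N1. \<forall>k\<ge>N1. wnorm p w l (u m - u k) < 1" using cau[of 1] by auto
  define B where "B = wnorm p w l (u N1) + 1"
  have bound: "wnorm p w l (u k) \<le> B" if "k \<ge> N1" for k
  proof -
    have "wnorm p w l (u k) \<le> wnorm p w l (u k - u N1) + wnorm p w l (u N1)"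
      using wnorm_tri[OF p1 g cu[of k] cu[of N1] iscyl_zero, of l] unfolding fun_diff_zero .
    thus ?thesis using N1 that unfolding B_def by force
  qed
  have B0: "0 \<le> B" unfolding B_def using wnorm_nonneg[OF p1 g cu] by (simp add: add_nonneg_nonneg)
  define \<delta> where "\<delta> = \<epsilon>\<^sup>2 / (2 * (B + 1))"
  have \<delta>0: "0 < \<delta>" unfolding \<delta>_def using \<epsilon> B0 by simp
  obtain N2 where N2: "\<forall>m\<ge>N2. \<forall>k\<ge>N2. wnorm p w l (u m - u k) < \<delta>" using cau[OF \<delta>0] by auto
  show "\<exists>no. \<forall>k\<ge>no. norm (wnorm p w l (u k) - 0) < \<epsilon>"
  proof (intro exI[of _ "max N1 N2"] allI impI)
    fix k assume k: "max N1 N2 \<le> k"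
    let ?a = "wnorm p w l (u k)"
    let ?A = "wnorm p w (2 * l) (u k)"
    have a0: "0 \<le> ?a" by (rule wnorm_nonneg[OF p1 g cu])
    have A0: "0 \<le> ?A" by (rule wnorm_nonneg[OF p1 g cu])
    have "0 < \<delta> / (?A + 1)" using \<delta>0 A0 by simp
    then obtain J where J: "\<forall>j\<ge>J. norm (wnorm p (\<lambda>_. 0) 0 (u j) - 0) < \<delta> / (?A + 1)"
      using LIMSEQ_D[OF null] by blast
    define j where "j = max J N2"
    have "\<bar>wnorm p (\<lambda>_. 0) 0 (u j)\<bar> < \<delta> / (?A + 1)" using J unfolding j_def by auto
    hence Lj: "wnorm p (\<lambda>_. 0) 0 (u j) < \<delta> / (?A + 1)" by linarith
    have Lj0: "0 \<le> wnorm p (\<lambda>_. 0) 0 (u j)" by (rule wnorm_nonneg[OF p1 goodw_zero cu])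
    have key: "?a\<^sup>2 \<le> ?a * wnorm p w l (u k - u j) + ?A * wnorm p (\<lambda>_. 0) 0 (u j)"
      by (rule key_ineq[OF p1 g cu cu])
    have d1: "wnorm p w l (u k - u j) < \<delta>" using N2 k unfolding j_def by auto
    have d10: "0 \<le> wnorm p w l (u k - u j)" by (rule wnorm_nonneg[OF p1 g iscyl_diff[OF cu cu]])
    have t1: "?a * wnorm p w l (u k - u j) \<le> B * \<delta>"
      using mult_mono[OF bound[of k] less_imp_le[OF d1] B0 d10] k by auto
    have t2: "?A * wnorm p (\<lambda>_. 0) 0 (u j) \<le> \<delta>"
    proof -
      have "?A * wnorm p (\<lambda>_. 0) 0 (u j) \<le> ?A * (\<delta> / (?A + 1))"
        using mult_left_mono[OF less_imp_le[OF Lj] A0] .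
      also have "\<dots> = \<delta> * (?A / (?A + 1))" by simp
      also have "?A / (?A + 1) \<le> 1" using A0 by simp
      hence "\<delta> * (?A / (?A + 1)) \<le> \<delta> * 1" using \<delta>0 by (intro mult_left_mono) auto
      finally show ?thesis by simp
    qed
    have e1: "(B + 1) * \<delta> = B * \<delta> + \<delta>" by (simp add: algebra_simps)
    have "?a\<^sup>2 \<le> (B + 1) * \<delta>" using key t1 t2 e1 by linarith
    also have "\<dots> = \<epsilon>\<^sup>2 / 2"
    proof -
      have aux: "\<And>x. (B + 1) * (x / (2 * (B + 1))) = x / 2" using B0 by (simp add: field_simps)
      show ?thesis unfolding \<delta>_def by (rule aux)
    qed
    also have "\<dots> < \<epsilon>\<^sup>2" using \<epsilon> by simp
    finally have "?a\<^sup>2 < \<epsilon>\<^sup>2" .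
    hence sq: "?a\<^sup>2 < \<epsilon>\<^sup>2" .
    have "\<not> \<epsilon> \<le> ?a"
    proof
      assume "\<epsilon> \<le> ?a"
      hence "\<epsilon>\<^sup>2 \<le> ?a\<^sup>2" using \<epsilon> by (intro power_mono) auto
      thus False using sq by simp
    qed
    hence "?a < \<epsilon>" by simp
    thus "norm (?a - 0) < \<epsilon>" using a0 by simp
  qed
qed

lemma haar_zero: "haar_int p (\<lambda>_. 0 :: 'a::real_normed_vector) = 0"
  unfolding haar_int_def by (simp add: limI)

lemma hat_zero_fun: "hat p (\<lambda>_. 0) \<xi> = 0"
  unfolding hat_def by (simp add: haar_zero)

lemma wnorm_zero_fun: "wnorm p w l (\<lambda>_. 0) = 0"
  unfolding wnorm_def hat_zero_fun by (simp add: haar_zero)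

lemma wnorm_self: "wnorm p w l (f - f) = 0"
proof -
  have "f - f = (\<lambda>_. 0)" by (simp add: fun_diff_def)
  thus ?thesis by (simp add: wnorm_zero_fun)
qed

lemma wcauchy_iscyl: "1 < p \<Longrightarrow> wcauchy p w l s \<Longrightarrow> iscyl p (s k)"
  unfolding wcauchy_def using dfun_iscyl by blast

lemma wcauchy_L2:
  assumes p1: "1 < p" and g: "goodw p w" and s: "wcauchy p w l s"
  shows "wcauchy p (\<lambda>_. 0) 0 s"
  unfolding wcauchy_def
proof (intro conjI allI impI)
  fix k show "dfun p (s k)" using s unfolding wcauchy_def by auto
next
  fix e :: real assume "0 < e"
  then obtain N where N: "\<forall>m\<ge>N. \<forall>k\<ge>N. wnorm p w l (s m - s k) < e" using s unfolding wcauchy_def by blast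
  show "\<exists>N. \<forall>m\<ge>N. \<forall>k\<ge>N. wnorm p (\<lambda>_. 0) 0 (s m - s k) < e"
  proof (intro exI[of _ N] allI impI)
    fix m k assume "N \<le> m" "N \<le> k"
    have "wnorm p (\<lambda>_. 0) 0 (s m - s k) \<le> wnorm p w l (s m - s k)"
      by (rule L2_le_wnorm[OF p1 g iscyl_diff[OF wcauchy_iscyl[OF p1 s] wcauchy_iscyl[OF p1 s]]])
    thus "wnorm p (\<lambda>_. 0) 0 (s m - s k) < e" using N \<open>N \<le> m\<close> \<open>N \<le> k\<close> by fastforce
  qed
qed

lemma self_cls:
  assumes "1 < p" "goodw p w" "wcauchy p w l s"
  shows "s \<in> cls p s"
  unfolding cls_def using wcauchy_L2[OF assms] by (simp add: wnorm_self)

lemma conv_diff: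
  fixes s t :: "nat \<Rightarrow> ('n::finite \<Rightarrow> padic) \<Rightarrow> complex"
  assumes p1: "1 < p" and g: "goodw p w" and s: "wcauchy p w l s" and t: "wcauchy p w l t"
  shows "convergent (\<lambda>k. wnorm p w l (s k - t k))"
proof (rule Cauchy_convergent, rule metric_CauchyI)
  fix e :: real assume e: "0 < e"
  obtain N1 where N1: "\<forall>m\<ge>N1. \<forall>k\<ge>N1. wnorm p w l (s m - s k) < e / 2"
    using s e unfolding wcauchy_def by (meson half_gt_zero)
  obtain N2 where N2: "\<forall>m\<ge>N2. \<forall>k\<ge>N2. wnorm p w l (t m - t k) < e / 2"
    using t e unfolding wcauchy_def by (meson half_gt_zero)
  have cs: "\<And>k. iscyl p (s k)" by (rule wcauchy_iscyl[OF p1 s])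
  have ct: "\<And>k. iscyl p (t k)" by (rule wcauchy_iscyl[OF p1 t])
  show "\<exists>M. \<forall>m\<ge>M. \<forall>n\<ge>M. dist (wnorm p w l (s m - t m)) (wnorm p w l (s n - t n)) < e"
  proof (intro exI[of _ "max N1 N2"] allI impI)
    fix m n assume m: "max N1 N2 \<le> m" and n: "max N1 N2 \<le> n"
    have "\<bar>wnorm p w l (s m - t m) - wnorm p w l (s n - t n)\<bar> \<le> wnorm p w l ((s m - t m) - (s n - t n))"
      by (rule wnorm_absdiff[OF p1 g iscyl_diff[OF cs ct] iscyl_diff[OF cs ct]])
    also have "\<dots> \<le> wnorm p w l (s m - s n) + wnorm p w l (t m - t n)"
      by (rule wnorm_T4[OF p1 g cs ct cs ct])
    also have "\<dots> < e / 2 + e / 2" using N1 N2 m n by (intro add_strict_mono) auto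
    finally show "dist (wnorm p w l (s m - t m)) (wnorm p w l (s n - t n)) < e" by (simp add: dist_real_def)
  qed
qed

lemma cdist_lim:
  fixes s t :: "nat \<Rightarrow> ('n::finite \<Rightarrow> padic) \<Rightarrow> complex"
  assumes p1: "1 < p" and g: "goodw p w" and s: "wcauchy p w l s" and t: "wcauchy p w l t"
  shows "(\<lambda>k. wnorm p w l (s k - t k)) \<longlonglongrightarrow> cdist p w l (cls p s) (cls p t)"
proof -
  define r0 where "r0 = lim (\<lambda>k. wnorm p w l (s k - t k))"
  have r0: "(\<lambda>k. wnorm p w l (s k - t k)) \<longlonglongrightarrow> r0"
    unfolding r0_def using conv_diff[OF assms] by (simp add: convergent_LIMSEQ_iff)
  have cs: "\<And>k. iscyl p (s k)" by (rule wcauchy_iscyl[OF p1 s])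
  have ct: "\<And>k. iscyl p (t k)" by (rule wcauchy_iscyl[OF p1 t])
  have "cdist p w l (cls p s) (cls p t) = r0"
    unfolding cdist_def
  proof (rule the_equality)
    show "\<exists>s'\<in>cls p s. \<exists>t'\<in>cls p t. wcauchy p w l s' \<and> wcauchy p w l t' \<and> (\<lambda>k. wnorm p w l (s' k - t' k)) \<longlonglongrightarrow> r0"
      using self_cls[OF p1 g s] self_cls[OF p1 g t] s t r0 by blast
  next
    fix r assume "\<exists>s'\<in>cls p s. \<exists>t'\<in>cls p t. wcauchy p w l s' \<and> wcauchy p w l t' \<and> (\<lambda>k. wnorm p w l (s' k - t' k)) \<longlonglongrightarrow> r"
    then obtain s' t' where s'c: "s' \<in> cls p s" and t'c: "t' \<in> cls p t" and s': "wcauchy p w l s'"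
      and t': "wcauchy p w l t'" and r: "(\<lambda>k. wnorm p w l (s' k - t' k)) \<longlonglongrightarrow> r" by blast
    have cs': "\<And>k. iscyl p (s' k)" by (rule wcauchy_iscyl[OF p1 s'])
    have ct': "\<And>k. iscyl p (t' k)" by (rule wcauchy_iscyl[OF p1 t'])
    have ns: "(\<lambda>k. wnorm p (\<lambda>_. 0) 0 (s k - s' k)) \<longlonglongrightarrow> 0" using s'c unfolding cls_def by auto
    have nt: "(\<lambda>k. wnorm p (\<lambda>_. 0) 0 (t k - t' k)) \<longlonglongrightarrow> 0" using t'c unfolding cls_def by auto
    define u where "u = (\<lambda>k. (s k - t k) - (s' k - t' k))"
    have cu: "\<And>k. iscyl p (u k)" unfolding u_def
      by (intro iscyl_diff cs ct cs' ct')
    have nu: "(\<lambda>k. wnorm p (\<lambda>_. 0) 0 (u k)) \<longlonglongrightarrow> 0"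
    proof (rule tendsto_sandwich[of "\<lambda>_. 0" _ _ "\<lambda>k. wnorm p (\<lambda>_. 0) 0 (s k - s' k) + wnorm p (\<lambda>_. 0) 0 (t k - t' k)"])
      show "\<forall>\<^sub>F k in sequentially. 0 \<le> wnorm p (\<lambda>_. 0) 0 (u k)"
        using wnorm_nonneg[OF p1 goodw_zero cu] by simp
      show "\<forall>\<^sub>F k in sequentially. wnorm p (\<lambda>_. 0) 0 (u k) \<le> wnorm p (\<lambda>_. 0) 0 (s k - s' k) + wnorm p (\<lambda>_. 0) 0 (t k - t' k)"
        unfolding u_def using wnorm_T4[OF p1 goodw_zero cs ct cs' ct'] by simp
      show "(\<lambda>_. 0) \<longlonglongrightarrow> (0::real)" by simp
      show "(\<lambda>k. wnorm p (\<lambda>_. 0) 0 (s k - s' k) + wnorm p (\<lambda>_. 0) 0 (t k - t' k)) \<longlonglongrightarrow> 0"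
        using tendsto_add[OF ns nt] by simp
    qed
    have cau: "\<exists>N. \<forall>m\<ge>N. \<forall>k\<ge>N. wnorm p w l (u m - u k) < e" if e: "e > 0" for e
    proof -
      have e4: "e / 4 > 0" using e by simp
      obtain N1 where N1: "\<forall>m\<ge>N1. \<forall>k\<ge>N1. wnorm p w l (s m - s k) < e / 4" using s e4 unfolding wcauchy_def by blast
      obtain N2 where N2: "\<forall>m\<ge>N2. \<forall>k\<ge>N2. wnorm p w l (t m - t k) < e / 4" using t e4 unfolding wcauchy_def by blast
      obtain N3 where N3: "\<forall>m\<ge>N3. \<forall>k\<ge>N3. wnorm p w l (s' m - s' k) < e / 4" using s' e4 unfolding wcauchy_def by blast
      obtain N4 where N4: "\<forall>m\<ge>N4. \<forall>k\<ge>N4. wnorm p w l (t' m - t' k) < e / 4" using t' e4 unfolding wcauchy_def by blast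
      show ?thesis
      proof (intro exI[of _ "max (max N1 N2) (max N3 N4)"] allI impI)
        fix m k assume m: "max (max N1 N2) (max N3 N4) \<le> m" and k: "max (max N1 N2) (max N3 N4) \<le> k"
        have "wnorm p w l (u m - u k) \<le> wnorm p w l ((s m - t m) - (s k - t k)) + wnorm p w l ((s' m - t' m) - (s' k - t' k))"
          unfolding u_def by (rule wnorm_T4[OF p1 g]; intro iscyl_diff cs ct cs' ct')
        also have "\<dots> \<le> (wnorm p w l (s m - s k) + wnorm p w l (t m - t k)) + (wnorm p w l (s' m - s' k) + wnorm p w l (t' m - t' k))"
          by (intro add_mono wnorm_T4[OF p1 g] cs ct cs' ct')
        also have "\<dots> < (e/4 + e/4) + (e/4 + e/4)"
          using N1 N2 N3 N4 m k by (intro add_strict_mono) auto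
        finally show "wnorm p w l (u m - u k) < e" by simp
      qed
    qed
    have u0: "(\<lambda>k. wnorm p w l (u k)) \<longlonglongrightarrow> 0"
      by (rule null_lemma[OF p1 g cu cau nu])
    have d0: "(\<lambda>k. wnorm p w l (s k - t k) - wnorm p w l (s' k - t' k)) \<longlonglongrightarrow> 0"
    proof (rule tendsto_sandwich[of "\<lambda>k. - wnorm p w l (u k)" _ _ "\<lambda>k. wnorm p w l (u k)"])
      have ab: "\<And>k. \<bar>wnorm p w l (s k - t k) - wnorm p w l (s' k - t' k)\<bar> \<le> wnorm p w l (u k)"
        unfolding u_def by (rule wnorm_absdiff[OF p1 g]; intro iscyl_diff cs ct cs' ct')
      show "\<forall>\<^sub>F k in sequentially. - wnorm p w l (u k) \<le> wnorm p w l (s k - t k) - wnorm p w l (s' k - t' k)"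
      proof (rule always_eventually, rule allI)
        fix k show "- wnorm p w l (u k) \<le> wnorm p w l (s k - t k) - wnorm p w l (s' k - t' k)"
          using ab[of k] by linarith
      qed
      show "\<forall>\<^sub>F k in sequentially. wnorm p w l (s k - t k) - wnorm p w l (s' k - t' k) \<le> wnorm p w l (u k)"
      proof (rule always_eventually, rule allI)
        fix k show "wnorm p w l (s k - t k) - wnorm p w l (s' k - t' k) \<le> wnorm p w l (u k)"
          using ab[of k] by linarith
      qed
      show "(\<lambda>k. - wnorm p w l (u k)) \<longlonglongrightarrow> 0" using tendsto_minus[OF u0] by simp
      show "(\<lambda>k. wnorm p w l (u k)) \<longlonglongrightarrow> 0" by (rule u0)
    qed
    have "(\<lambda>k. wnorm p w l (s k - t k) - wnorm p w l (s' k - t' k)) \<longlonglongrightarrow> r0 - r"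
      by (rule tendsto_diff[OF r0 r])
    hence "r0 - r = 0" using d0 LIMSEQ_unique by blast
    thus "r = r0" by simp
  qed
  thus ?thesis using r0 by simp
qed

lemma weight_bound:
  fixes \<psi> :: "('n::finite \<Rightarrow> padic) \<Rightarrow> complex"
  assumes p1: "1 < p" and adm: "admissible p \<psi>"
  shows "\<exists>m C. 0 \<le> C \<and> (\<forall>\<xi>\<in>qpv p. (max 1 (vnorm p \<xi>)) ^ l \<le> C * (max 1 (cmod (\<psi> \<xi>))) ^ m)"
proof -
  have "type1 p \<psi> \<or> type2 p \<psi>" using adm unfolding admissible_def by auto
  thus ?thesis
  proof
    assume "type1 p \<psi>"
    then obtain C0 b0 where C0: "0 < C0" "0 < b0"
      and b: "\<forall>\<xi>\<in>qpv p. C0 * max 1 (vnorm p \<xi>) powr b0 \<le> max 1 (cmod (\<psi> \<xi>))"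
      unfolding type1_def by blast
    define m where "m = nat \<lceil>real l / b0\<rceil>"
    have lm: "real l \<le> b0 * real m"
    proof -
      have "real l / b0 \<le> real m" unfolding m_def by linarith
      thus ?thesis using C0 by (simp add: field_simps)
    qed
    show ?thesis
    proof (intro exI[of _ m] exI[of _ "(1 / C0) ^ m"] conjI ballI)
      show "0 \<le> (1 / C0) ^ m" using C0 by simp
      fix \<xi> :: "'n \<Rightarrow> padic" assume \<xi>: "\<xi> \<in> qpv p"
      define V where "V = max 1 (vnorm p \<xi>)"
      define P where "P = max 1 (cmod (\<psi> \<xi>))"
      have V1: "1 \<le> V" unfolding V_def by simp
      have "V ^ l = V powr real l" using V1 by (simp add: powr_realpow)
      also have "\<dots> \<le> V powr (b0 * real m)" using V1 lm by (intro powr_mono) auto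
      also have "\<dots> = (V powr b0) ^ m"
        using V1 by (simp add: powr_powr[symmetric] powr_realpow)
      also have "\<dots> \<le> (P / C0) ^ m"
      proof (rule power_mono)
        have "C0 * V powr b0 \<le> P" using b \<xi> unfolding V_def P_def by auto
        thus "V powr b0 \<le> P / C0" using C0 by (simp add: pos_le_divide_eq mult.commute)
        show "0 \<le> V powr b0" by simp
      qed
      also have "\<dots> = (1 / C0) ^ m * P ^ m" by (simp add: power_divide)
      finally show "(max 1 (vnorm p \<xi>)) ^ l \<le> (1 / C0) ^ m * (max 1 (cmod (\<psi> \<xi>))) ^ m"
        unfolding V_def P_def .
    qed
  next
    assume "type2 p \<psi>"
    hence "\<exists>C>0. \<forall>\<xi>\<in>qpv p. max 1 (cmod (\<psi> \<xi>)) > C * max 1 (vnorm p \<xi>) powr (real l + 1)"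
      unfolding type2_def by simp
    then obtain C where C: "C > 0" and b: "\<forall>\<xi>\<in>qpv p. max 1 (cmod (\<psi> \<xi>)) > C * max 1 (vnorm p \<xi>) powr (real l + 1)"
      by blast
    have bnd: "\<forall>\<xi>\<in>qpv p. (max 1 (vnorm p \<xi>)) ^ l \<le> 1 / C * (max 1 (cmod (\<psi> \<xi>))) ^ 1"
    proof
      fix \<xi> :: "'n \<Rightarrow> padic" assume \<xi>: "\<xi> \<in> qpv p"
      define V where "V = max 1 (vnorm p \<xi>)"
      define P where "P = max 1 (cmod (\<psi> \<xi>))"
      have V1: "1 \<le> V" unfolding V_def by simp
      have "V ^ l = V powr real l" using V1 by (simp add: powr_realpow)
      also have "\<dots> \<le> V powr (real l + 1)" using V1 by (intro powr_mono) auto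
      also have "\<dots> \<le> P / C"
      proof -
        have "C * V powr (real l + 1) < P" using b \<xi> unfolding V_def P_def by auto
        thus ?thesis using C by (simp add: pos_le_divide_eq mult.commute)
      qed
      finally show "(max 1 (vnorm p \<xi>)) ^ l \<le> 1 / C * (max 1 (cmod (\<psi> \<xi>))) ^ 1"
        unfolding V_def P_def by simp
    qed
    have "0 \<le> 1 / C" using C by simp
    thus ?thesis using bnd by blast
  qed
qed

lemma wcauchy_transfer:
  fixes s :: "nat \<Rightarrow> ('n::finite \<Rightarrow> padic) \<Rightarrow> complex"
  assumes p1: "1 < p" and g1: "goodw p w1" and g2: "goodw p w2" and C: "0 \<le> C"
    and le: "\<forall>\<xi>\<in>qpv p. (max 1 (w1 \<xi>)) ^ l1 \<le> C * (max 1 (w2 \<xi>)) ^ l2"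
    and s: "wcauchy p w2 l2 s"
  shows "wcauchy p w1 l1 s"
  unfolding wcauchy_def
proof (intro conjI allI impI)
  fix k show "dfun p (s k)" using s unfolding wcauchy_def by auto
next
  fix e :: real assume e: "0 < e"
  have sc: "0 \<le> sqrt C" using C by simp
  have sc1: "0 < sqrt C + 1" using sc by linarith
  have e': "0 < e / (sqrt C + 1)" using e sc1 by (rule divide_pos_pos)
  then obtain N where N: "\<forall>m\<ge>N. \<forall>k\<ge>N. wnorm p w2 l2 (s m - s k) < e / (sqrt C + 1)"
    using s unfolding wcauchy_def by blast
  show "\<exists>N. \<forall>m\<ge>N. \<forall>k\<ge>N. wnorm p w1 l1 (s m - s k) < e"
  proof (intro exI[of _ N] allI impI)
    fix m k assume m: "N \<le> m" and k: "N \<le> k"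
    have c: "iscyl p (s m - s k)" by (intro iscyl_diff wcauchy_iscyl[OF p1 s])
    have "wnorm p w1 l1 (s m - s k) \<le> sqrt C * wnorm p w2 l2 (s m - s k)"
      by (rule wnorm_mono_weight[OF p1 g1 g2 c C]) (use le in auto)
    also have "\<dots> \<le> sqrt C * (e / (sqrt C + 1))"
      using N m k C by (intro mult_left_mono) (auto intro: less_imp_le)
    also have "\<dots> < e"
    proof -
      have "sqrt C * (e / (sqrt C + 1)) = e * (sqrt C / (sqrt C + 1))" by simp
      also have "sqrt C / (sqrt C + 1) < 1" using sc1 by (simp add: divide_less_eq)
      hence "e * (sqrt C / (sqrt C + 1)) < e * 1" using e by (intro mult_strict_left_mono) auto
      finally show ?thesis by simp
    qed
    finally show "wnorm p w1 l1 (s m - s k) < e" .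
  qed
qed

lemma Bsp_transfer:
  fixes F :: "(nat \<Rightarrow> ('n::finite \<Rightarrow> padic) \<Rightarrow> complex) set"
  assumes p1: "1 < p" and g1: "goodw p w1" and g2: "goodw p w2" and C: "0 \<le> C"
    and le: "\<forall>\<xi>\<in>qpv p. (max 1 (w1 \<xi>)) ^ l1 \<le> C * (max 1 (w2 \<xi>)) ^ l2"
    and F: "F \<in> Bsp p w2 l2"
  shows "F \<in> Bsp p w1 l1"
  using F wcauchy_transfer[OF p1 g1 g2 C le] unfolding Bsp_def by blast

lemma cdist_nonneg:
  fixes F G :: "(nat \<Rightarrow> ('n::finite \<Rightarrow> padic) \<Rightarrow> complex) set"
  assumes p1: "1 < p" and g: "goodw p w" and F: "F \<in> Bsp p w l" and G: "G \<in> Bsp p w l"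
  shows "0 \<le> cdist p w l F G"
proof -
  obtain s t where s: "wcauchy p w l s" "F = cls p s" and t: "wcauchy p w l t" "G = cls p t"
    using F G unfolding Bsp_def by blast
  have lim: "(\<lambda>k. wnorm p w l (s k - t k)) \<longlonglongrightarrow> cdist p w l F G"
    unfolding s(2) t(2) by (rule cdist_lim[OF p1 g s(1) t(1)])
  show ?thesis
    by (rule LIMSEQ_le_const[OF lim]) (use wnorm_nonneg[OF p1 g iscyl_diff[OF wcauchy_iscyl[OF p1 s(1)] wcauchy_iscyl[OF p1 t(1)]]] in auto)
qed

lemma cdist_compare:
  fixes F G :: "(nat \<Rightarrow> ('n::finite \<Rightarrow> padic) \<Rightarrow> complex) set"
  assumes p1: "1 < p" and g1: "goodw p w1" and g2: "goodw p w2" and C: "0 \<le> C"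
    and le: "\<forall>\<xi>\<in>qpv p. (max 1 (w1 \<xi>)) ^ l1 \<le> C * (max 1 (w2 \<xi>)) ^ l2"
    and F: "F \<in> Bsp p w2 l2" and G: "G \<in> Bsp p w2 l2"
  shows "cdist p w1 l1 F G \<le> sqrt C * cdist p w2 l2 F G"
proof -
  obtain s t where s: "wcauchy p w2 l2 s" "F = cls p s" and t: "wcauchy p w2 l2 t" "G = cls p t"
    using F G unfolding Bsp_def by blast
  have s1: "wcauchy p w1 l1 s" by (rule wcauchy_transfer[OF p1 g1 g2 C le s(1)])
  have t1: "wcauchy p w1 l1 t" by (rule wcauchy_transfer[OF p1 g1 g2 C le t(1)])
  have lim1: "(\<lambda>k. wnorm p w1 l1 (s k - t k)) \<longlonglongrightarrow> cdist p w1 l1 F G"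
    unfolding s(2) t(2) by (rule cdist_lim[OF p1 g1 s1 t1])
  have lim2: "(\<lambda>k. sqrt C * wnorm p w2 l2 (s k - t k)) \<longlonglongrightarrow> sqrt C * cdist p w2 l2 F G"
    unfolding s(2) t(2) by (rule tendsto_mult_left, rule cdist_lim[OF p1 g2 s(1) t(1)])
  show ?thesis
  proof (rule LIMSEQ_le[OF lim1 lim2], intro exI allI impI)
    fix k
    have c: "iscyl p (s k - t k)" by (intro iscyl_diff wcauchy_iscyl[OF p1 s(1)] wcauchy_iscyl[OF p1 t(1)])
    show "wnorm p w1 l1 (s k - t k) \<le> sqrt C * wnorm p w2 l2 (s k - t k)"
      by (rule wnorm_mono_weight[OF p1 g1 g2 c C]) (use le in auto)
  qed
qed

lemma frac_mono:
  fixes a b :: real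
  assumes "0 \<le> a" "a \<le> b"
  shows "a / (1 + a) \<le> b / (1 + b)"
proof -
  have "a * (1 + b) \<le> b * (1 + a)" using assms by (simp add: algebra_simps)
  thus ?thesis using assms by (simp add: divide_simps)
qed

lemma frac_le_self: "0 \<le> (c::real) \<Longrightarrow> c / (1 + c) \<le> c"
proof -
  assume c: "0 \<le> c"
  have "c * 1 \<le> c * (1 + c)" using c by (intro mult_left_mono) auto
  thus ?thesis using c by (simp add: divide_simps)
qed

lemma frac_le_one: "0 \<le> (c::real) \<Longrightarrow> c / (1 + c) \<le> 1"
  by (simp add: divide_simps)

lemma frac_nonneg: "0 \<le> (c::real) \<Longrightarrow> 0 \<le> c / (1 + c)"
  by simp

lemma term_eq: "(1/2::real) ^ l * c / (1 + c) = (1/2) ^ l * (c / (1 + c))"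
  by simp

lemma term_le: "0 \<le> (c::real) \<Longrightarrow> (1/2::real) ^ l * c / (1 + c) \<le> (1/2) ^ l"
proof -
  assume c: "0 \<le> c"
  have "(1/2::real) ^ l * (c / (1 + c)) \<le> (1/2) ^ l * 1"
    by (rule mult_left_mono) (use frac_le_one[OF c] in auto)
  thus ?thesis unfolding term_eq by simp
qed

lemma term_nonneg: "0 \<le> (c::real) \<Longrightarrow> 0 \<le> (1/2::real) ^ l * c / (1 + c)"
  by simp

lemma term_le_c: "0 \<le> (c::real) \<Longrightarrow> (1/2::real) ^ l * c / (1 + c) \<le> c"
proof -
  assume c: "0 \<le> c"
  have "(1/2::real) ^ l * (c / (1 + c)) \<le> 1 * (c / (1 + c))"
    by (rule mult_right_mono) (use c in \<open>auto simp: power_le_one\<close>)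
  also have "\<dots> \<le> c" using frac_le_self[OF c] by simp
  finally show ?thesis unfolding term_eq .
qed

theorem lemma4p2:
  fixes p :: nat and \<psi> :: "('n::finite \<Rightarrow> padic) \<Rightarrow> complex"
  assumes "prime p" and "admissible p \<psi>"
  shows "Binf p (\<lambda>\<xi>. cmod (\<psi> \<xi>)) \<subseteq> Binf p (vnorm p)
    \<and> (\<forall>F\<in>Binf p (\<lambda>\<xi>. cmod (\<psi> \<xi>)). \<forall>e>0. \<exists>d>0. \<forall>G\<in>Binf p (\<lambda>\<xi>. cmod (\<psi> \<xi>)).
          fdist p (\<lambda>\<xi>. cmod (\<psi> \<xi>)) F G < d \<longrightarrow> fdist p (vnorm p) F G < e)"
proof -
  have p1: "1 < p" using assms(1) by (rule prime_gt_1_nat)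
  have gp: "goodw p (\<lambda>\<xi>. cmod (\<psi> \<xi>))" by (rule goodw_psi[OF _ assms(2)]) (use p1 in auto)
  have gv: "goodw p (vnorm p :: ('n \<Rightarrow> padic) \<Rightarrow> real)" by (rule goodw_vnorm) (use p1 in auto)
  have "\<forall>l. \<exists>m C. 0 \<le> C \<and> (\<forall>\<xi>\<in>qpv p. (max 1 (vnorm p \<xi>)) ^ l \<le> C * (max 1 (cmod (\<psi> \<xi>))) ^ m)"
    using weight_bound[OF p1 assms(2)] by blast
  then obtain mf Cf where mC: "\<And>l. 0 \<le> Cf l" "\<And>l. \<forall>\<xi>\<in>qpv p. (max 1 (vnorm p \<xi>)) ^ l \<le> Cf l * (max 1 (cmod (\<psi> \<xi>))) ^ mf l"
    by metis
  have sub: "Binf p (\<lambda>\<xi>. cmod (\<psi> \<xi>)) \<subseteq> Binf p (vnorm p)"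
  proof
    fix F assume F: "F \<in> Binf p (\<lambda>\<xi>. cmod (\<psi> \<xi>))"
    show "F \<in> Binf p (vnorm p)" unfolding Binf_def
    proof
      fix l
      have "F \<in> Bsp p (\<lambda>\<xi>. cmod (\<psi> \<xi>)) (mf l)" using F unfolding Binf_def by auto
      thus "F \<in> Bsp p (vnorm p) l" by (rule Bsp_transfer[OF p1 gv gp mC(1) mC(2)])
    qed
  qed
  have cont: "\<forall>F\<in>Binf p (\<lambda>\<xi>. cmod (\<psi> \<xi>)). \<forall>e>0. \<exists>d>0. \<forall>G\<in>Binf p (\<lambda>\<xi>. cmod (\<psi> \<xi>)).
          fdist p (\<lambda>\<xi>. cmod (\<psi> \<xi>)) F G < d \<longrightarrow> fdist p (vnorm p) F G < e"
  proof (intro ballI allI impI)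
    fix F :: "(nat \<Rightarrow> ('n \<Rightarrow> padic) \<Rightarrow> complex) set" and e :: real
    assume F: "F \<in> Binf p (\<lambda>\<xi>. cmod (\<psi> \<xi>))" and e: "0 < e"
    have e2: "0 < e / 2" using e by simp
    obtain L where L: "(1/2::real) ^ L < e / 2" using real_arch_pow_inv[OF e2, of "1/2"] by auto
    define \<eta> where "\<eta> = (\<lambda>l. (e / 2) / (sqrt (Cf l) + 1))"
    have \<eta>0: "0 < \<eta> l" for l
    proof -
      have "0 < sqrt (Cf l) + 1" using real_sqrt_ge_zero[OF mC(1)[of l]] by linarith
      thus ?thesis unfolding \<eta>_def using e2 by simp
    qed
    define \<delta> where "\<delta> = (\<lambda>l. (1/2::real) ^ mf l * (\<eta> l / (1 + \<eta> l)))"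
    have \<delta>0: "0 < \<delta> l" for l
    proof -
      have "0 < \<eta> l / (1 + \<eta> l)" using \<eta>0[of l] by simp
      thus ?thesis unfolding \<delta>_def by (intro mult_pos_pos) auto
    qed
    define d where "d = Min (insert 1 (\<delta> ` {..<L}))"
    have d0: "0 < d" unfolding d_def using \<delta>0 by (subst Min_gr_iff) auto
    have d\<delta>: "d \<le> \<delta> l" if "l < L" for l unfolding d_def using that by (intro Min_le) auto
    show "\<exists>d>0. \<forall>G\<in>Binf p (\<lambda>\<xi>. cmod (\<psi> \<xi>)). fdist p (\<lambda>\<xi>. cmod (\<psi> \<xi>)) F G < d \<longrightarrow> fdist p (vnorm p) F G < e"
    proof (intro exI[of _ d] conjI d0 ballI impI)
      fix G assume G: "G \<in> Binf p (\<lambda>\<xi>. cmod (\<psi> \<xi>))" and fd: "fdist p (\<lambda>\<xi>. cmod (\<psi> \<xi>)) F G < d"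
      have Fp: "\<And>m. F \<in> Bsp p (\<lambda>\<xi>. cmod (\<psi> \<xi>)) m" and Gp: "\<And>m. G \<in> Bsp p (\<lambda>\<xi>. cmod (\<psi> \<xi>)) m"
        using F G unfolding Binf_def by auto
      have Fv: "\<And>m. F \<in> Bsp p (vnorm p) m" and Gv: "\<And>m. G \<in> Bsp p (vnorm p) m"
        using sub F G unfolding Binf_def by auto
      define cp where "cp = (\<lambda>m. cdist p (\<lambda>\<xi>. cmod (\<psi> \<xi>)) m F G)"
      define cv where "cv = (\<lambda>m. cdist p (vnorm p) m F G)"
      have cp0: "0 \<le> cp m" for m unfolding cp_def by (rule cdist_nonneg[OF p1 gp Fp Gp])
      have cv0: "0 \<le> cv m" for m unfolding cv_def by (rule cdist_nonneg[OF p1 gv Fv Gv])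
      have bddp: "bdd_above (range (\<lambda>m. (1/2::real) ^ m * cp m / (1 + cp m)))"
      proof (rule bdd_aboveI[of _ 1])
        fix x assume "x \<in> range (\<lambda>m. (1/2::real) ^ m * cp m / (1 + cp m))"
        then obtain m where x: "x = (1/2::real) ^ m * cp m / (1 + cp m)" by auto
        have "(1/2::real) ^ m \<le> 1" by (rule power_le_one) auto
        thus "x \<le> 1" using term_le[OF cp0, of m m] unfolding x by linarith
      qed
      have termp: "(1/2::real) ^ m * cp m / (1 + cp m) < d" for m
      proof -
        have "(1/2::real) ^ m * cp m / (1 + cp m) \<le> fdist p (\<lambda>\<xi>. cmod (\<psi> \<xi>)) F G"
        proof -
          have fe: "fdist p (\<lambda>\<xi>. cmod (\<psi> \<xi>)) F G = (SUP m. (1/2::real) ^ m * cp m / (1 + cp m))"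
            by (simp add: fdist_def cp_def)
          show ?thesis unfolding fe by (rule cSUP_upper[OF _ bddp]) auto
        qed
        thus ?thesis using fd by simp
      qed
      have small: "(1/2::real) ^ l * cv l / (1 + cv l) \<le> e / 2" for l
      proof (cases "L \<le> l")
        case True
        have "(1/2::real) ^ l * cv l / (1 + cv l) \<le> (1/2) ^ l" by (rule term_le[OF cv0])
        also have "\<dots> \<le> (1/2) ^ L" using True by (intro power_decreasing) auto
        finally show ?thesis using L by linarith
      next
        case False
        hence lL: "l < L" by simp
        let ?m = "mf l"
        have "(1/2::real) ^ ?m * (cp ?m / (1 + cp ?m)) < (1/2) ^ ?m * (\<eta> l / (1 + \<eta> l))"
          using termp[of ?m] d\<delta>[OF lL] unfolding \<delta>_def term_eq by simp
        hence fr: "cp ?m / (1 + cp ?m) < \<eta> l / (1 + \<eta> l)" by (rule mult_left_less_imp_less) simp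
        have cpl: "cp ?m < \<eta> l"
        proof (rule ccontr)
          assume "\<not> cp ?m < \<eta> l"
          hence "\<eta> l / (1 + \<eta> l) \<le> cp ?m / (1 + cp ?m)" using \<eta>0[of l] by (intro frac_mono) auto
          thus False using fr by simp
        qed
        have "cv l \<le> sqrt (Cf l) * cp ?m"
          unfolding cv_def cp_def by (rule cdist_compare[OF p1 gv gp mC(1) mC(2) Fp Gp])
        also have "\<dots> \<le> sqrt (Cf l) * \<eta> l" using cpl mC(1)[of l] by (intro mult_left_mono) auto
        also have "\<dots> \<le> e / 2"
        proof -
          have s0: "0 \<le> sqrt (Cf l)" using mC(1) by simp
          have s1: "0 < sqrt (Cf l) + 1" using s0 by linarith
          have "sqrt (Cf l) * \<eta> l = (e / 2) * (sqrt (Cf l) / (sqrt (Cf l) + 1))" unfolding \<eta>_def by simp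
          also have "sqrt (Cf l) / (sqrt (Cf l) + 1) \<le> 1" using s1 by (simp add: divide_le_eq)
          hence "(e / 2) * (sqrt (Cf l) / (sqrt (Cf l) + 1)) \<le> (e / 2) * 1" using e2 by (intro mult_left_mono) auto
          finally show ?thesis by simp
        qed
        finally have "cv l \<le> e / 2" .
        thus ?thesis using term_le_c[OF cv0[of l], of l] by linarith
      qed
      have "fdist p (vnorm p) F G \<le> e / 2"
      proof -
        have fe: "fdist p (vnorm p) F G = (SUP m. (1/2::real) ^ m * cv m / (1 + cv m))"
          by (simp add: fdist_def cv_def)
        show ?thesis unfolding fe by (rule cSUP_least) (use small in auto)
      qed
      thus "fdist p (vnorm p) F G < e" using e by simp
    qed
  qed
  show ?thesis using sub cont by blast
qed

end
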